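(* Let $m$ be a positive integer with $m<n$. The set of all elements of $D_n$ of the form $$w_1^{j_1}\cdot t_2^{i_2}\cdot w_2^{j_2}\cdot t_3^{i_3}\cdots w_{m-1}^{j_{m-1}}\cdot t_m^{i_m}\cdot w_m^{j_m},$$ with $0\le j_k\le 1$ for $1\le k\le m$ and $0\le i_k\le k-1$ for $2\le k\le m$ (for $m=1$ this is just $w_1^{j_1}$), is a subgroup of $D_n$ isomorphic to the hyperoctahedral group $B_m$.
   Context: $D_n$ ($n\ge 2$) is the Coxeter group with generators $s_{1'},s_1,\dots,s_{n-1}$ and relations $s^2=1$ for each generator, $(s_i s_{i+1})^3=1$, $(s_is_j)^2=1$ for $|i-j|\ge 2$, $(s_{1'}s_2)^3=1$, and $(s_{1'}s_i)^2=1$ for $i\ne 2$. For $2\le k\le n$, $t_k=s_1 s_2\cdots s_{k-1}$; for $1\le k\le n-1$, $w_k=s_k s_{k-1}\cdots s_2 s_1 s_{1'} s_2\cdots s_k$. $B_m$ denotes the group of signed permutations of $\{\pm1,\dots,\pm m\}$ (bijections $\sigma$ with $\sigma(-i)=-\sigma(i)$), of order $2^m m!$. *)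

theory Defs
  imports "HOL-Algebra.Algebra"
begin

text \<open>Coxeter group D_n by generators and relations.
  Letters: 0 encodes s_{1'}, and i (1 <= i <= n-1) encodes s_i. Words are lists of letters < n.\<close>

definition D_relators :: "nat \<Rightarrow> nat list set" where
  "D_relators n =
     {[g, g] | g. g < n}
   \<union> {concat (replicate 3 [i, i + 1]) | i. 1 \<le> i \<and> i + 1 < n}
   \<union> {concat (replicate 2 [i, j]) | i j. 1 \<le> i \<and> 1 \<le> j \<and> i < n \<and> j < n \<and> (i + 2 \<le> j \<or> j + 2 \<le> i)}
   \<union> (if 2 < n then {concat (replicate 3 [0, 2])} else {})
   \<union> {concat (replicate 2 [0, i]) | i. 1 \<le> i \<and> i < n \<and> i \<noteq> 2}"

inductive Deq :: "nat \<Rightarrow> nat list \<Rightarrow> nat list \<Rightarrow> bool" for n where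
  Deq_refl: "Deq n w w"
| Deq_sym: "Deq n u v \<Longrightarrow> Deq n v u"
| Deq_trans: "Deq n u v \<Longrightarrow> Deq n v w \<Longrightarrow> Deq n u w"
| Deq_rel: "r \<in> D_relators n \<Longrightarrow> Deq n (a @ r @ b) (a @ b)"

definition Dclass :: "nat \<Rightarrow> nat list \<Rightarrow> nat list set" where
  "Dclass n w = {v. Deq n w v}"

definition D_group :: "nat \<Rightarrow> nat list set monoid" where
  "D_group n = \<lparr> carrier = Dclass n ` lists {..<n},
                 monoid.mult = (\<lambda>A B. \<Union>a\<in>A. \<Union>b\<in>B. Dclass n (a @ b)),
                 one = Dclass n [] \<rparr>"

text \<open>Words for t_k = s_1 s_2 ... s_{k-1} and w_k = s_k ... s_2 s_1 s_{1'} s_2 ... s_k.\<close>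
definition t_word :: "nat \<Rightarrow> nat list" where
  "t_word k = [1..<k]"

definition w_word :: "nat \<Rightarrow> nat list" where
  "w_word k = rev [1..<k + 1] @ [0] @ [2..<k + 1]"

definition word_pow :: "nat list \<Rightarrow> nat \<Rightarrow> nat list" where
  "word_pow u e = concat (replicate e u)"

definition normal_word :: "nat \<Rightarrow> (nat \<Rightarrow> nat) \<Rightarrow> (nat \<Rightarrow> nat) \<Rightarrow> nat list" where
  "normal_word m j i =
     concat (map (\<lambda>k. (if 2 \<le> k then word_pow (t_word k) (i k) else []) @ word_pow (w_word k) (j k))
                 [1..<m + 1])"

definition H_set :: "nat \<Rightarrow> nat \<Rightarrow> nat list set set" where
  "H_set n m = {Dclass n (normal_word m j i) | j i.
                  (\<forall>k\<in>{1..m}. j k \<le> 1) \<and> (\<forall>k\<in>{2..m}. i k \<le> k - 1)}"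

text \<open>Hyperoctahedral group B_m: signed permutations of {+-1,...,+-m}
  (as functions on int, identity outside), composition as product.\<close>
definition signed_set :: "nat \<Rightarrow> int set" where
  "signed_set m = {-int m..int m} - {0}"

definition B_group :: "nat \<Rightarrow> (int \<Rightarrow> int) monoid" where
  "B_group m = \<lparr> carrier = {\<sigma>. bij_betw \<sigma> (signed_set m) (signed_set m)
                            \<and> (\<forall>x\<in>signed_set m. \<sigma> (- x) = - \<sigma> x)
                            \<and> (\<forall>x. x \<notin> signed_set m \<longrightarrow> \<sigma> x = x)},
                 monoid.mult = (\<circ>),
                 one = id \<rparr>"

end

theory Submission
  imports Defs
begin


lemma Deq_cong: "Deq n u v \<Longrightarrow> Deq n (a @ u @ b) (a @ v @ b)"
proof (induction rule: Deq.induct)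
  case (Deq_refl w) then show ?case by (rule Deq.Deq_refl)
next
  case (Deq_sym u v) then show ?case by (blast intro: Deq.Deq_sym)
next
  case (Deq_trans u v w) then show ?case by (metis Deq.Deq_trans)
next
  case (Deq_rel r a' b')
  have "Deq n ((a @ a') @ r @ (b' @ b)) ((a @ a') @ (b' @ b))" by (rule Deq.Deq_rel[OF Deq_rel])
  then show ?case by simp
qed

lemma Deq_app: "Deq n u u' \<Longrightarrow> Deq n v v' \<Longrightarrow> Deq n (u @ v) (u' @ v')"
proof -
  assume a: "Deq n u u'" and b: "Deq n v v'"
  have "Deq n ([] @ u @ v) ([] @ u' @ v)" by (rule Deq_cong[OF a])
  moreover have "Deq n (u' @ v @ []) (u' @ v' @ [])" by (rule Deq_cong[OF b])
  ultimately show ?thesis by (auto intro: Deq.Deq_trans)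
qed

lemma Deq_left: "Deq n u u' \<Longrightarrow> Deq n (a @ u) (a @ u')"
  using Deq_cong[of n u u' a "[]"] by simp
lemma Deq_right: "Deq n u u' \<Longrightarrow> Deq n (u @ b) (u' @ b)"
  using Deq_cong[of n u u' "[]" b] by simp

lemmas Deq_trans' [trans] = Deq.Deq_trans

lemma Deq_symI: "Deq n u v \<Longrightarrow> Deq n v u" by (rule Deq.Deq_sym)

lemma rel_gg: "g < n \<Longrightarrow> [g, g] \<in> D_relators n"
  unfolding D_relators_def by blast

lemma Deq_gg: "g < n \<Longrightarrow> Deq n [g, g] []"
  using Deq.Deq_rel[OF rel_gg, of g n "[]" "[]"] by simp

lemma cancel: "set v \<subseteq> {..<n} \<Longrightarrow> Deq n (v @ rev v) []"
proof (induction v)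
  case Nil then show ?case by (simp add: Deq.Deq_refl)
next
  case (Cons g v)
  have g: "g < n" using Cons.prems by auto
  have "Deq n ([g] @ (v @ rev v) @ [g]) ([g] @ [] @ [g])"
    by (rule Deq_cong, rule Cons.IH) (use Cons.prems in auto)
  also have "([g] @ [] @ [g]) = [g,g]" by simp
  also have "Deq n [g,g] []" by (rule Deq_gg[OF g])
  finally show ?case by simp
qed

lemma cancel': "set v \<subseteq> {..<n} \<Longrightarrow> Deq n (rev v @ v) []"
  using cancel[of "rev v" n] by simp

lemma rel_eq: assumes "Deq n (u @ v) []" "set v \<subseteq> {..<n}" shows "Deq n u (rev v)"
proof -
  have "Deq n (u @ (v @ rev v)) (u @ [])" by (rule Deq_left, rule cancel[OF assms(2)])
  then have "Deq n u (u @ v @ rev v)" by (simp add: Deq_symI)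
  also have "Deq n (u @ v @ rev v) (rev v)" using Deq_right[OF assms(1), of "rev v"] by simp
  finally show ?thesis by simp
qed

lemma relD: "r \<in> D_relators n \<Longrightarrow> Deq n r []"
  using Deq.Deq_rel[of r n "[]" "[]"] by simp

lemma braid: assumes "1 \<le> i" "i + 1 < n" shows "Deq n [i, i+1, i] [i+1, i, i+1]"
proof -
  have "concat (replicate 3 [i, i+1]) \<in> D_relators n"
    unfolding D_relators_def using assms by blast
  then have "Deq n ([i, i+1, i] @ [i+1, i, i+1]) []"
    by (auto dest!: relD simp: numeral_3_eq_3)
  from rel_eq[OF this] show ?thesis using assms by auto
qed

lemma braid02: assumes "2 < n" shows "Deq n [0, 2, 0] [2, 0, 2]"
proof -
  have "concat (replicate 3 [0, 2]) \<in> D_relators n"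
    unfolding D_relators_def using assms by simp
  then have "Deq n ([0, 2, 0] @ [2, 0, 2]) []"
    by (auto dest!: relD simp: numeral_3_eq_3)
  from rel_eq[OF this] show ?thesis using assms by auto
qed

definition cm :: "nat \<Rightarrow> nat \<Rightarrow> bool" where
  "cm g x \<longleftrightarrow> g = x \<or> (1 \<le> g \<and> 1 \<le> x \<and> (g + 2 \<le> x \<or> x + 2 \<le> g)) \<or> (g = 0 \<and> x \<noteq> 2) \<or> (x = 0 \<and> g \<noteq> 2)"

lemma cm_sym: "cm g x \<Longrightarrow> cm x g" unfolding cm_def by auto

lemma comm_rel: assumes "concat (replicate 2 [a, b]) \<in> D_relators n" "a < n" "b < n"
  shows "Deq n [a, b] [b, a]"
proof -
  have "Deq n ([a, b] @ [a, b]) []" using relD[OF assms(1)] by (simp add: numeral_2_eq_2)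
  from rel_eq[OF this] show ?thesis using assms by auto
qed

lemma comm2: assumes "cm g x" "g < n" "x < n" shows "Deq n [g, x] [x, g]"
proof -
  consider "g = x" | "1 \<le> g \<and> 1 \<le> x \<and> (g + 2 \<le> x \<or> x + 2 \<le> g)" | "g = 0 \<and> x \<noteq> 2 \<and> x \<noteq> 0" | "x = 0 \<and> g \<noteq> 2 \<and> g \<noteq> 0"
    using assms(1) unfolding cm_def by force
  then show ?thesis
  proof cases
    case 1 then show ?thesis by (simp add: Deq.Deq_refl)
  next
    case 2
    then have "concat (replicate 2 [g, x]) \<in> D_relators n" unfolding D_relators_def using assms by blast
    then show ?thesis using comm_rel assms by blast
  next
    case 3
    then have "concat (replicate 2 [g, x]) \<in> D_relators n" unfolding D_relators_def using assms by auto
    then show ?thesis using comm_rel assms by blast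
  next
    case 4
    then have "concat (replicate 2 [x, g]) \<in> D_relators n" unfolding D_relators_def using assms by auto
    then show ?thesis using comm_rel assms Deq_symI by blast
  qed
qed


lemma comm_letter: assumes "\<forall>y\<in>set v. cm g y" "g < n" "set v \<subseteq> {..<n}"
  shows "Deq n ([g] @ v) (v @ [g])"
  using assms
proof (induction v)
  case Nil then show ?case by (simp add: Deq.Deq_refl)
next
  case (Cons y v)
  have "Deq n ([g, y] @ v) ([y, g] @ v)" by (rule Deq_right, rule comm2) (use Cons.prems in auto)
  also have "[y, g] @ v = [y] @ ([g] @ v)" by simp
  also have "Deq n ([y] @ ([g] @ v)) ([y] @ (v @ [g]))" by (rule Deq_left, rule Cons.IH) (use Cons.prems in auto)
  finally show ?case by simp
qed

lemma comm_words: assumes "\<forall>x\<in>set u. \<forall>y\<in>set v. cm x y" "set u \<subseteq> {..<n}" "set v \<subseteq> {..<n}"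
  shows "Deq n (u @ v) (v @ u)"
  using assms
proof (induction u)
  case Nil then show ?case by (simp add: Deq.Deq_refl)
next
  case (Cons x u)
  have "Deq n ([x] @ (u @ v)) ([x] @ (v @ u))" by (rule Deq_left, rule Cons.IH) (use Cons.prems in auto)
  also have "[x] @ (v @ u) = ([x] @ v) @ u" by simp
  also have "Deq n (([x] @ v) @ u) ((v @ [x]) @ u)" by (rule Deq_right, rule comm_letter) (use Cons.prems in auto)
  finally show ?case by simp
qed

lemma upt_split3: assumes "a \<le> i" "i + 2 \<le> b" shows "[a..<b] = [a..<i] @ [i, i+1] @ [i+2..<b]"
proof -
  have "[a..<b] = [a..<i] @ [i..<b]" using assms upt_add_eq_append[of a i "b - i"] by simp
  moreover have "[i..<b] = i # (i+1) # [i+2..<b]" using assms by (simp add: upt_conv_Cons)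
  ultimately show ?thesis by simp
qed

lemma shift1: assumes "1 \<le> a" "a \<le> i" "i + 2 \<le> b" "b \<le> n"
  shows "Deq n ([a..<b] @ [i]) ([i+1] @ [a..<b])"
proof -
  have "[a..<b] @ [i] = [a..<i] @ [i, i+1] @ ([i+2..<b] @ [i])" using upt_split3[OF assms(2,3)] by simp
  also have "Deq n ([a..<i] @ [i, i+1] @ ([i+2..<b] @ [i])) ([a..<i] @ [i, i+1] @ ([i] @ [i+2..<b]))"
    by (rule Deq_left, rule Deq_left, rule Deq_symI, rule comm_letter) (use assms in \<open>auto simp: cm_def\<close>)
  also have "[a..<i] @ [i, i+1] @ ([i] @ [i+2..<b]) = [a..<i] @ [i, i+1, i] @ [i+2..<b]" by simp
  also have "Deq n ([a..<i] @ [i, i+1, i] @ [i+2..<b]) ([a..<i] @ [i+1, i, i+1] @ [i+2..<b])"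
    by (rule Deq_cong, rule braid) (use assms in auto)
  also have "[a..<i] @ [i+1, i, i+1] @ [i+2..<b] = ([a..<i] @ [i+1]) @ [i, i+1] @ [i+2..<b]" by simp
  also have "Deq n (([a..<i] @ [i+1]) @ [i, i+1] @ [i+2..<b]) (([i+1] @ [a..<i]) @ [i, i+1] @ [i+2..<b])"
    by (rule Deq_right, rule Deq_symI, rule comm_letter) (use assms in \<open>auto simp: cm_def\<close>)
  also have "([i+1] @ [a..<i]) @ [i, i+1] @ [i+2..<b] = [i+1] @ [a..<b]" using upt_split3[OF assms(2,3)] by simp
  finally show ?thesis .
qed

lemma conj_inv: assumes "Deq n (v @ x) (y @ v)" "set v \<subseteq> {..<n}"
  shows "Deq n (rev v @ y) (x @ rev v)"
proof -
  have "Deq n (rev v @ y) (rev v @ y @ (v @ rev v))"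
    using Deq_left[OF cancel[OF assms(2)], of "rev v @ y"] by (simp add: Deq_symI)
  also have "rev v @ y @ (v @ rev v) = rev v @ (y @ v) @ rev v" by simp
  also have "Deq n (rev v @ (y @ v) @ rev v) (rev v @ (v @ x) @ rev v)"
    by (rule Deq_cong, rule Deq_symI, rule assms(1))
  also have "rev v @ (v @ x) @ rev v = (rev v @ v) @ x @ rev v" by simp
  also have "Deq n ((rev v @ v) @ x @ rev v) ([] @ x @ rev v)"
    by (rule Deq_right, rule cancel'[OF assms(2)])
  finally show ?thesis by simp
qed

lemma word_pow_0[simp]: "word_pow u 0 = []" by (simp add: word_pow_def)
lemma word_pow_Suc: "word_pow u (Suc j) = u @ word_pow u j" by (simp add: word_pow_def)
lemma word_pow_add: "word_pow u (i + j) = word_pow u i @ word_pow u j"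
  by (simp add: word_pow_def replicate_add)
lemma word_pow_Suc': "word_pow u (Suc j) = word_pow u j @ u"
  using word_pow_add[of u j 1] by (simp add: word_pow_def)
lemma word_pow_1[simp]: "word_pow u 1 = u" by (simp add: word_pow_def)
lemma word_pow_Nil[simp]: "word_pow [] j = []" by (simp add: word_pow_def)
lemma set_word_pow: "set (word_pow u j) \<subseteq> set u" by (auto simp: word_pow_def)

lemma Deq_pow: "Deq n u v \<Longrightarrow> Deq n (word_pow u j) (word_pow v j)"
  by (induction j) (auto simp: word_pow_Suc Deq.Deq_refl intro: Deq_app)

lemma shift_pow: assumes "1 \<le> a" "a \<le> i" "i + j + 1 \<le> b" "b \<le> n"
  shows "Deq n (word_pow [a..<b] j @ [i]) ([i+j] @ word_pow [a..<b] j)"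
  using assms
proof (induction j arbitrary: i)
  case 0 then show ?case by (simp add: Deq.Deq_refl)
next
  case (Suc j)
  have "word_pow [a..<b] (Suc j) @ [i] = [a..<b] @ (word_pow [a..<b] j @ [i])" by (simp add: word_pow_Suc)
  also have "Deq n ([a..<b] @ (word_pow [a..<b] j @ [i])) ([a..<b] @ ([i+j] @ word_pow [a..<b] j))"
    by (rule Deq_left, rule Suc.IH) (use Suc.prems in auto)
  also have "[a..<b] @ ([i+j] @ word_pow [a..<b] j) = ([a..<b] @ [i+j]) @ word_pow [a..<b] j" by simp
  also have "Deq n (([a..<b] @ [i+j]) @ word_pow [a..<b] j) (([i+j+1] @ [a..<b]) @ word_pow [a..<b] j)"
    by (rule Deq_right, rule shift1) (use Suc.prems in auto)
  finally show ?case by (simp add: word_pow_Suc)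
qed

lemma cycle_order: assumes "1 \<le> a" "a + d = b" "b \<le> n"
  shows "Deq n (word_pow [a..<b] (Suc d)) []"
  using assms
proof (induction d arbitrary: a)
  case 0 then show ?case by (simp add: Deq.Deq_refl)
next
  case (Suc d)
  let ?c = "[a..<b]"
  note outer = Suc.prems
  have T: "Deq n ([a..<a+j] @ word_pow ?c j) (word_pow ([a] @ ?c) j)" if "j \<le> Suc d" for j
    using that
  proof (induction j)
    case 0 then show ?case by (simp add: Deq.Deq_refl)
  next
    case (Suc j)
    have "Deq n ([a..<a+Suc j] @ word_pow ?c (Suc j)) ([a..<a+j] @ ([a+j] @ word_pow ?c j) @ ?c)"
      by (simp add: word_pow_Suc' Deq.Deq_refl)
    also have "Deq n ([a..<a+j] @ ([a+j] @ word_pow ?c j) @ ?c) ([a..<a+j] @ (word_pow ?c j @ [a]) @ ?c)"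
      by (rule Deq_cong, rule Deq_symI, rule shift_pow) (use Suc.prems outer in auto)
    also have "[a..<a+j] @ (word_pow ?c j @ [a]) @ ?c = ([a..<a+j] @ word_pow ?c j) @ ([a] @ ?c)" by simp
    also have "Deq n (([a..<a+j] @ word_pow ?c j) @ ([a] @ ?c)) (word_pow ([a] @ ?c) j @ ([a] @ ?c))"
      by (rule Deq_right, rule Suc.IH) (use Suc.prems in auto)
    finally show ?case by (simp add: word_pow_Suc')
  qed
  have c: "?c = a # [a+1..<b]" using Suc.prems by (simp add: upt_conv_Cons)
  have "word_pow ?c (Suc (Suc d)) = [a..<a + Suc d] @ word_pow ?c (Suc d)"
    using Suc.prems by (simp add: word_pow_Suc)
  also have "Deq n ([a..<a + Suc d] @ word_pow ?c (Suc d)) (word_pow ([a] @ ?c) (Suc d))" by (rule T) simp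
  also have "Deq n (word_pow ([a] @ ?c) (Suc d)) (word_pow [a+1..<b] (Suc d))"
  proof (rule Deq_pow)
    have "Deq n ([a, a] @ [a+1..<b]) ([] @ [a+1..<b])" by (rule Deq_right, rule Deq_gg) (use Suc.prems in auto)
    then show "Deq n ([a] @ ?c) [a+1..<b]" using c by simp
  qed
  also have "Deq n (word_pow [a+1..<b] (Suc d)) []" by (rule Suc.IH) (use Suc.prems in auto)
  finally show ?case .
qed


lemma basics: assumes "3 \<le> n" shows
  "Deq n [0,0] []" "Deq n [1,1] []" "Deq n [2,2] []" "Deq n [1,2,1] [2,1,2]" "Deq n [2,1,2] [1,2,1]"
  "Deq n [0,2,0] [2,0,2]" "Deq n [2,0,2] [0,2,0]" "Deq n [0,1] [1,0]" "Deq n [1,0] [0,1]"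
proof -
  show "Deq n [0,0] []" "Deq n [1,1] []" "Deq n [2,2] []" by (rule Deq_gg; use assms in simp)+
  show "Deq n [1,2,1] [2,1,2]" using braid[of 1 n] assms by (simp add: numeral_2_eq_2)
  then show "Deq n [2,1,2] [1,2,1]" by (rule Deq_symI)
  show "Deq n [0,2,0] [2,0,2]" using braid02[of n] assms by simp
  then show "Deq n [2,0,2] [0,2,0]" by (rule Deq_symI)
  show "Deq n [0,1] [1,0]" by (rule comm2) (use assms in \<open>auto simp: cm_def\<close>)
  then show "Deq n [1,0] [0,1]" by (rule Deq_symI)
qed

lemma conc1: assumes "3 \<le> n" shows "Deq n [1,2,1,0] [1,0,2,1,0,2,1,2]"
proof -
  note B = basics[OF assms]
  have "Deq n [1,2,1,0] [1,2,0,1]" using Deq_cong[OF B(9), of "[1,2]" "[]"] by simp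
  also have "Deq n [1,2,0,1] [1,0,0,2,0,1]" using Deq_cong[OF Deq_symI[OF B(1)], of "[1]" "[2,0,1]"] by simp
  also have "Deq n [1,0,0,2,0,1] [1,0,2,0,2,1]" using Deq_cong[OF B(6), of "[1,0]" "[1]"] by simp
  also have "Deq n [1,0,2,0,2,1] [1,0,2,1,1,0,2,1]" using Deq_cong[OF Deq_symI[OF B(2)], of "[1,0,2]" "[0,2,1]"] by simp
  also have "Deq n [1,0,2,1,1,0,2,1] [1,0,2,1,0,1,2,1]" using Deq_cong[OF B(9), of "[1,0,2,1]" "[2,1]"] by simp
  also have "Deq n [1,0,2,1,0,1,2,1] [1,0,2,1,0,2,1,2]" using Deq_cong[OF B(4), of "[1,0,2,1,0]" "[]"] by simp
  finally show ?thesis by simp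
qed

lemma conc2: assumes "3 \<le> n" shows "Deq n [1,0,2,1,0,2] [2,1,0,2,1,0]"
proof -
  note B = basics[OF assms]
  have "Deq n [1,0,2,1,0,2] [0,1,2,1,0,2]" using Deq_cong[OF B(9), of "[]" "[2,1,0,2]"] by simp
  also have "Deq n [0,1,2,1,0,2] [0,2,1,2,0,2]" using Deq_cong[OF B(4), of "[0]" "[0,2]"] by simp
  also have "Deq n [0,2,1,2,0,2] [0,2,1,0,2,0]" using Deq_cong[OF B(7), of "[0,2,1]" "[]"] by simp
  also have "Deq n [0,2,1,0,2,0] [0,2,0,1,2,0]" using Deq_cong[OF B(9), of "[0,2]" "[2,0]"] by simp
  also have "Deq n [0,2,0,1,2,0] [2,0,2,1,2,0]" using Deq_cong[OF B(6), of "[]" "[1,2,0]"] by simp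
  also have "Deq n [2,0,2,1,2,0] [2,0,1,2,1,0]" using Deq_cong[OF B(5), of "[2,0]" "[0]"] by simp
  also have "Deq n [2,0,1,2,1,0] [2,1,0,2,1,0]" using Deq_cong[OF B(8), of "[2]" "[2,1,0]"] by simp
  finally show ?thesis by simp
qed

lemma conc3: assumes "3 \<le> n" shows "Deq n [2,1,0,2,1] [1,1,0,2,1,0,2]"
proof -
  note B = basics[OF assms]
  have "Deq n [2,1,0,2,1] [2,0,1,2,1]" using Deq_cong[OF B(9), of "[2]" "[2,1]"] by simp
  also have "Deq n [2,0,1,2,1] [2,0,2,1,2]" using Deq_cong[OF B(4), of "[2,0]" "[]"] by simp
  also have "Deq n [2,0,2,1,2] [0,2,0,1,2]" using Deq_cong[OF B(7), of "[]" "[1,2]"] by simp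
  also have "Deq n [0,2,0,1,2] [0,2,1,0,2]" using Deq_cong[OF B(8), of "[0,2]" "[2]"] by simp
  also have "Deq n [0,2,1,0,2] [1,1,0,2,1,0,2]" using Deq_cong[OF Deq_symI[OF B(2)], of "[]" "[0,2,1,0,2]"] by simp
  finally show ?thesis by simp
qed

lemma W1W1: assumes "2 \<le> n" shows "Deq n ([1,0] @ [1,0]) []"
proof -
  have c: "Deq n [1,0] [0,1]" by (rule comm2) (use assms in \<open>auto simp: cm_def\<close>)
  have "Deq n ([1,0] @ [1,0]) ([0,1] @ [1,0])" by (rule Deq_right[OF c])
  also have "[0,1] @ [1,0] = [0] @ [1,1] @ [0]" by simp
  also have "Deq n ([0] @ [1,1] @ [0]) ([0] @ [] @ [0])" by (rule Deq_cong, rule Deq_gg) (use assms in auto)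
  also have "Deq n ([0] @ [] @ [0]) []" using Deq_gg[of 0 n] assms by simp
  finally show ?thesis .
qed

lemma W1rev: assumes "2 \<le> n" shows "Deq n [0,1] [1,0]"
  by (rule comm2) (use assms in \<open>auto simp: cm_def\<close>)

lemma w_2: "w_word 2 = [2,1,0,2]" by (simp add: w_word_def upt_rec)
lemma w_alt: "1 \<le> k \<Longrightarrow> w_word k = rev [2..<k+1] @ [1,0] @ [2..<k+1]"
  by (simp add: w_word_def upt_conv_Cons numeral_2_eq_2)
lemma w_alt3: assumes "2 \<le> k" shows "w_word k = rev [3..<k+1] @ w_word 2 @ [3..<k+1]"
proof -
  have e: "[2..<k+1] = 2 # [3..<k+1]" using assms by (simp add: upt_conv_Cons)
  have "w_word k = rev [2..<k+1] @ [1,0] @ [2..<k+1]" using w_alt assms by simp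
  also have "... = rev [3..<k+1] @ [2,1,0,2] @ [3..<k+1]" unfolding e by simp
  finally show ?thesis unfolding w_2 .
qed

lemma w_1: "w_word 1 = [1,0]" by (simp add: w_word_def)

lemma w_Suc: "1 \<le> k \<Longrightarrow> w_word (Suc k) = [Suc k] @ w_word k @ [Suc k]"
  by (simp add: w_word_def)

lemma set_w: "set (w_word k) \<subseteq> {..k}" by (auto simp: w_word_def)
lemma set_t: "set (t_word k) \<subseteq> {1..<k}" by (auto simp: t_word_def)

lemma w_letters: "k < n \<Longrightarrow> set (w_word k) \<subseteq> {..<n}" using set_w[of k] by auto

lemma ww: assumes "1 \<le> k" "k < n" shows "Deq n (w_word k @ w_word k) []"
proof -
  let ?v = "[2..<k+1]"
  have sv: "set ?v \<subseteq> {..<n}" using assms by auto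
  have "w_word k @ w_word k = rev ?v @ [1,0] @ (?v @ rev ?v) @ [1,0] @ ?v" using w_alt[OF assms(1)] by simp
  also have "Deq n (rev ?v @ [1,0] @ (?v @ rev ?v) @ [1,0] @ ?v) (rev ?v @ [1,0] @ [] @ [1,0] @ ?v)"
    by (rule Deq_left, rule Deq_left, rule Deq_right, rule cancel[OF sv])
  also have "rev ?v @ [1,0] @ [] @ [1,0] @ ?v = rev ?v @ ([1,0] @ [1,0]) @ ?v" by simp
  also have "Deq n (rev ?v @ ([1,0] @ [1,0]) @ ?v) (rev ?v @ [] @ ?v)" by (rule Deq_cong, rule W1W1) (use assms in auto)
  also have "Deq n (rev ?v @ [] @ ?v) []" using cancel'[OF sv] by simp
  finally show ?thesis .
qed


lemma cm_far: "g \<ge> x + 2 \<or> x \<ge> g + 2 \<Longrightarrow> (x = 0 \<longrightarrow> g \<ge> 3) \<Longrightarrow> (g = 0 \<longrightarrow> x \<ge> 3) \<Longrightarrow> cm g x"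
  unfolding cm_def by auto

lemma w_1s: "w_word (Suc 0) = [1,0]" by (simp add: w_word_def)

lemma upt_split: "a \<le> b \<Longrightarrow> b \<le> c \<Longrightarrow> [a..<c] = [a..<b] @ [b..<c]"
  using upt_add_eq_append[of a b "c - b"] by simp

lemma wrev: assumes "1 \<le> k" "k < n" shows "Deq n (rev (w_word k)) (w_word k)"
proof -
  let ?v = "[2..<k+1]"
  have "rev (w_word k) = rev ?v @ [0,1] @ ?v" using w_alt[OF assms(1)] by simp
  also have "Deq n (rev ?v @ [0,1] @ ?v) (rev ?v @ [1,0] @ ?v)" by (rule Deq_cong, rule W1rev) (use assms in auto)
  also have "rev ?v @ [1,0] @ ?v = w_word k" using w_alt[OF assms(1)] by simp
  finally show ?thesis .
qed

lemma wW1: assumes "1 \<le> j" "j < n" shows "Deq n ([1,0] @ w_word j) (w_word j @ [1,0])"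
proof (cases "j = 1")
  case True then show ?thesis by (simp add: w_1 w_1s Deq.Deq_refl)
next
  case False
  then have j2: "2 \<le> j" using assms by auto
  then have n3: "3 \<le> n" using assms by auto
  let ?v = "[3..<j+1]"
  have sv: "set ?v \<subseteq> {..<n}" using assms by auto
  have cv: "\<forall>x\<in>set [1,0]. \<forall>y\<in>set ?v. cm x y" by (auto intro!: cm_far)
  have "[1,0] @ w_word j = ([1,0] @ rev ?v) @ w_word 2 @ ?v" using w_alt3[OF j2] by simp
  also have "Deq n (([1,0] @ rev ?v) @ w_word 2 @ ?v) ((rev ?v @ [1,0]) @ w_word 2 @ ?v)"
    by (rule Deq_right, rule comm_words) (use cv sv assms in auto)
  also have "(rev ?v @ [1,0]) @ w_word 2 @ ?v = rev ?v @ [1,0,2,1,0,2] @ ?v" by (simp add: w_2)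
  also have "Deq n (rev ?v @ [1,0,2,1,0,2] @ ?v) (rev ?v @ [2,1,0,2,1,0] @ ?v)" by (rule Deq_cong, rule conc2[OF n3])
  also have "rev ?v @ [2,1,0,2,1,0] @ ?v = rev ?v @ w_word 2 @ ([1,0] @ ?v)" by (simp add: w_2)
  also have "Deq n (rev ?v @ w_word 2 @ ([1,0] @ ?v)) (rev ?v @ w_word 2 @ (?v @ [1,0]))"
    by (rule Deq_left, rule Deq_left, rule comm_words) (use cv sv assms in auto)
  also have "rev ?v @ w_word 2 @ (?v @ [1,0]) = w_word j @ [1,0]" using w_alt3[OF j2] by simp
  finally show ?thesis .
qed

lemma w_si: assumes "2 \<le> i" "i + 1 \<le> k" "k < n" shows "Deq n (w_word k @ [i]) ([i] @ w_word k)"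
proof -
  let ?v = "[2..<k+1]"
  have k1: "1 \<le> k" using assms by auto
  have sv: "set ?v \<subseteq> {..<n}" using assms by auto
  have sh: "Deq n (?v @ [i]) ([i+1] @ ?v)" by (rule shift1) (use assms in auto)
  have sh': "Deq n (rev ?v @ [i+1]) ([i] @ rev ?v)" by (rule conj_inv[OF sh sv])
  have "w_word k @ [i] = rev ?v @ [1,0] @ (?v @ [i])" using w_alt[OF k1] by simp
  also have "Deq n (rev ?v @ [1,0] @ (?v @ [i])) (rev ?v @ [1,0] @ ([i+1] @ ?v))"
    by (rule Deq_left, rule Deq_left, rule sh)
  also have "rev ?v @ [1,0] @ ([i+1] @ ?v) = rev ?v @ ([1,0] @ [i+1]) @ ?v" by simp
  also have "Deq n (rev ?v @ ([1,0] @ [i+1]) @ ?v) (rev ?v @ ([i+1] @ [1,0]) @ ?v)"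
    by (rule Deq_cong, rule comm_words) (use assms in \<open>auto intro!: cm_far\<close>)
  also have "rev ?v @ ([i+1] @ [1,0]) @ ?v = (rev ?v @ [i+1]) @ [1,0] @ ?v" by simp
  also have "Deq n ((rev ?v @ [i+1]) @ [1,0] @ ?v) (([i] @ rev ?v) @ [1,0] @ ?v)"
    by (rule Deq_right, rule sh')
  also have "([i] @ rev ?v) @ [1,0] @ ?v = [i] @ w_word k" using w_alt[OF k1] by simp
  finally show ?thesis .
qed

lemma w_s1: assumes "2 \<le> k" "k < n" shows "Deq n (w_word k @ [1]) ([1] @ [1,0] @ w_word k)"
proof -
  let ?v = "[3..<k+1]"
  have n3: "3 \<le> n" using assms by auto
  have sv: "set ?v \<subseteq> {..<n}" using assms by auto
  have "w_word k @ [1] = rev ?v @ w_word 2 @ (?v @ [1])" using w_alt3[OF assms(1)] by simp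
  also have "Deq n (rev ?v @ w_word 2 @ (?v @ [1])) (rev ?v @ w_word 2 @ ([1] @ ?v))"
    by (rule Deq_left, rule Deq_left, rule comm_words) (use sv assms in \<open>auto intro!: cm_far\<close>)
  also have "rev ?v @ w_word 2 @ ([1] @ ?v) = rev ?v @ [2,1,0,2,1] @ ?v" by (simp add: w_2)
  also have "Deq n (rev ?v @ [2,1,0,2,1] @ ?v) (rev ?v @ [1,1,0,2,1,0,2] @ ?v)" by (rule Deq_cong, rule conc3[OF n3])
  also have "rev ?v @ [1,1,0,2,1,0,2] @ ?v = (rev ?v @ [1,1,0]) @ w_word 2 @ ?v" by (simp add: w_2)
  also have "Deq n ((rev ?v @ [1,1,0]) @ w_word 2 @ ?v) (([1,1,0] @ rev ?v) @ w_word 2 @ ?v)"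
    by (rule Deq_right, rule comm_words) (use sv assms in \<open>auto intro!: cm_far\<close>)
  also have "([1,1,0] @ rev ?v) @ w_word 2 @ ?v = [1] @ [1,0] @ w_word k" using w_alt3[OF assms(1)] by simp
  finally show ?thesis .
qed

lemma c_wlast: assumes "1 \<le> j" "j + 1 \<le> n" shows "Deq n ([1..<Suc j] @ w_word j) ([1,0] @ [1..<Suc j])"
  using assms
proof (induction j rule: nat_induct_at_least)
  case base
  have c: "Deq n [1,0] [0,1]" by (rule Deq_symI, rule W1rev) (use base in auto)
  have "[1..<Suc 1] @ w_word 1 = [1,1,0]" by (simp add: w_1 w_1s)
  also have "Deq n [1,1,0] ([] @ [0])" using Deq_right[OF Deq_gg[of 1 n], of "[0]"] base by simp
  also have "Deq n ([] @ [0]) ([0] @ [1,1])" using Deq_left[OF Deq_gg[of 1 n], of "[0]"] base by (simp add: Deq_symI)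
  also have "[0] @ [1,1] = [0,1] @ [1]" by simp
  also have "Deq n ([0,1] @ [1]) ([1,0] @ [1])" by (rule Deq_right, rule W1rev) (use base in auto)
  also have "[1,0] @ [1] = [1,0] @ [1..<Suc 1]" by simp
  finally show ?case .
next
  case (Suc j)
  have "[1..<Suc (Suc j)] @ w_word (Suc j) = [1..<Suc j] @ [Suc j, Suc j] @ w_word j @ [Suc j]"
    using w_Suc[OF Suc.hyps] by simp
  also have "Deq n ([1..<Suc j] @ [Suc j, Suc j] @ w_word j @ [Suc j]) ([1..<Suc j] @ [] @ w_word j @ [Suc j])"
    by (rule Deq_cong, rule Deq_gg) (use Suc.prems in auto)
  also have "[1..<Suc j] @ [] @ w_word j @ [Suc j] = ([1..<Suc j] @ w_word j) @ [Suc j]" by simp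
  also have "Deq n (([1..<Suc j] @ w_word j) @ [Suc j]) (([1,0] @ [1..<Suc j]) @ [Suc j])"
    by (rule Deq_right, rule Suc.IH) (use Suc.prems in auto)
  also have "([1,0] @ [1..<Suc j]) @ [Suc j] = [1,0] @ [1..<Suc (Suc j)]" by simp
  finally show ?case .
qed

lemma c_w0: assumes "1 \<le> j" "j + 2 \<le> n"
  shows "Deq n ([1..<j+2] @ w_word j) ([1,0] @ w_word (j+1) @ [1..<j+2])"
  using assms
proof (induction j rule: nat_induct_at_least)
  case base
  have n3: "3 \<le> n" using base by auto
  have "[1..<1+2] @ w_word 1 = [1,2,1,0]" by (simp add: w_1 w_1s upt_rec)
  also have "Deq n [1,2,1,0] [1,0,2,1,0,2,1,2]" by (rule conc1[OF n3])
  also have "[1,0,2,1,0,2,1,2] = [1,0] @ w_word 2 @ [1..<1+2]" by (simp add: w_2 upt_rec)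
  finally show ?case by (simp add: numeral_2_eq_2)
next
  case (Suc j)
  let ?c = "[1..<Suc j + 2]"
  let ?cb = "[1..<j + 2]"
  have j1: "1 \<le> Suc j" by simp
  have cdec: "?c = ?cb @ [j+2]" by simp
  have sw: "set (w_word j) \<subseteq> {..j}" by (rule set_w)
  have sh: "Deq n (?c @ [Suc j]) ([Suc j + 1] @ ?c)" by (rule shift1) (use Suc.prems Suc.hyps in auto)
  have cw: "Deq n (?c @ w_word j) ([1,0] @ w_word (j+1) @ ?c)"
  proof -
    have "?c @ w_word j = ?cb @ ([j+2] @ w_word j)" using cdec by simp
    also have "Deq n (?cb @ ([j+2] @ w_word j)) (?cb @ (w_word j @ [j+2]))"
      by (rule Deq_left, rule comm_letter) (use sw Suc.prems Suc.hyps in \<open>auto intro!: cm_far\<close>)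
    also have "?cb @ (w_word j @ [j+2]) = (?cb @ w_word j) @ [j+2]" by simp
    also have "Deq n ((?cb @ w_word j) @ [j+2]) (([1,0] @ w_word (j+1) @ ?cb) @ [j+2])"
      by (rule Deq_right, rule Suc.IH) (use Suc.prems in auto)
    also have "([1,0] @ w_word (j+1) @ ?cb) @ [j+2] = [1,0] @ w_word (j+1) @ ?c" using cdec by simp
    finally show ?thesis .
  qed
  have "?c @ w_word (Suc j) = (?c @ [Suc j]) @ w_word j @ [Suc j]" using w_Suc[OF Suc.hyps] by simp
  also have "Deq n ((?c @ [Suc j]) @ w_word j @ [Suc j]) (([Suc j + 1] @ ?c) @ w_word j @ [Suc j])"
    by (rule Deq_right, rule sh)
  also have "([Suc j + 1] @ ?c) @ w_word j @ [Suc j] = [Suc j + 1] @ (?c @ w_word j) @ [Suc j]" by simp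
  also have "Deq n ([Suc j + 1] @ (?c @ w_word j) @ [Suc j]) ([Suc j + 1] @ ([1,0] @ w_word (j+1) @ ?c) @ [Suc j])"
    by (rule Deq_cong, rule cw)
  also have "[Suc j + 1] @ ([1,0] @ w_word (j+1) @ ?c) @ [Suc j] = ([Suc j + 1] @ [1,0]) @ w_word (j+1) @ (?c @ [Suc j])" by simp
  also have "Deq n (([Suc j + 1] @ [1,0]) @ w_word (j+1) @ (?c @ [Suc j])) (([Suc j + 1] @ [1,0]) @ w_word (j+1) @ ([Suc j + 1] @ ?c))"
    by (rule Deq_left, rule Deq_left, rule sh)
  also have "Deq n (([Suc j + 1] @ [1,0]) @ (w_word (j+1) @ [Suc j + 1] @ ?c)) (([1,0] @ [Suc j + 1]) @ (w_word (j+1) @ [Suc j + 1] @ ?c))"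
    by (rule Deq_right, rule comm_words) (use Suc.prems Suc.hyps in \<open>auto intro!: cm_far\<close>)
  also have "([1,0] @ [Suc j + 1]) @ (w_word (j+1) @ [Suc j + 1] @ ?c) = [1,0] @ w_word (Suc j + 1) @ ?c"
    using w_Suc[of "Suc j"] by simp
  finally show ?case .
qed

lemma c_w: assumes "1 \<le> j" "j + 2 \<le> k" "k \<le> n"
  shows "Deq n ([1..<k] @ w_word j) ([1,0] @ w_word (j+1) @ [1..<k])"
proof -
  have split: "[1..<k] = [1..<j+2] @ [j+2..<k]" using assms by (intro upt_split) auto
  have sw: "set (w_word j) \<subseteq> {..j}" by (rule set_w)
  have "[1..<k] @ w_word j = [1..<j+2] @ ([j+2..<k] @ w_word j)" using split by simp
  also have "Deq n ([1..<j+2] @ ([j+2..<k] @ w_word j)) ([1..<j+2] @ (w_word j @ [j+2..<k]))"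
    by (rule Deq_left, rule comm_words) (use sw assms in \<open>auto intro!: cm_far\<close>)
  also have "[1..<j+2] @ (w_word j @ [j+2..<k]) = ([1..<j+2] @ w_word j) @ [j+2..<k]" by simp
  also have "Deq n (([1..<j+2] @ w_word j) @ [j+2..<k]) (([1,0] @ w_word (j+1) @ [1..<j+2]) @ [j+2..<k])"
    by (rule Deq_right, rule c_w0) (use assms in auto)
  also have "([1,0] @ w_word (j+1) @ [1..<j+2]) @ [j+2..<k] = [1,0] @ w_word (j+1) @ [1..<k]" using split by simp
  finally show ?thesis .
qed


lemma relator_letters: "r \<in> D_relators n \<Longrightarrow> set r \<subseteq> {..<n}"
  unfolding D_relators_def by (auto simp: numeral_3_eq_3 numeral_2_eq_2 split: if_splits)

lemma Deq_rev: "Deq n u v \<Longrightarrow> Deq n (rev u) (rev v)"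
proof (induction rule: Deq.induct)
  case (Deq_refl w) then show ?case by (rule Deq.Deq_refl)
next
  case (Deq_sym u v) then show ?case by (blast intro: Deq.Deq_sym)
next
  case (Deq_trans u v w) then show ?case by (metis Deq.Deq_trans)
next
  case (Deq_rel r a b)
  have sr: "set r \<subseteq> {..<n}" by (rule relator_letters[OF Deq_rel])
  have "Deq n (rev r) []"
  proof -
    have "Deq n (rev r @ r) (rev r @ [])" by (rule Deq_left, rule relD[OF Deq_rel])
    then have "Deq n (rev r) (rev r @ r)" by (simp add: Deq_symI)
    also have "Deq n (rev r @ r) []" by (rule cancel'[OF sr])
    finally show ?thesis .
  qed
  then have "Deq n (rev b @ rev r @ rev a) (rev b @ [] @ rev a)" by (rule Deq_cong)
  then show ?case by simp
qed

definition Ycat :: "nat list set \<Rightarrow> nat list \<Rightarrow> bool" where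
  "Ycat Y u \<longleftrightarrow> (\<exists>ys. set ys \<subseteq> Y \<and> u = concat ys)"

lemma Ycat_Nil: "Ycat Y []" unfolding Ycat_def by (rule exI[of _ "[]"]) simp
lemma Ycat_single: "y \<in> Y \<Longrightarrow> Ycat Y y" unfolding Ycat_def by (rule exI[of _ "[y]"]) simp
lemma Ycat_app: "Ycat Y u \<Longrightarrow> Ycat Y v \<Longrightarrow> Ycat Y (u @ v)"
  unfolding Ycat_def by (metis concat_append set_append Un_subset_iff)
lemma Ycat_pow: "Ycat Y u \<Longrightarrow> Ycat Y (word_pow u j)"
  by (induction j) (auto simp: word_pow_Suc Ycat_Nil Ycat_app)
lemma Ycat_letters: "(\<forall>i\<in>set u. [i] \<in> Y) \<Longrightarrow> Ycat Y u"
proof (induction u)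
  case Nil then show ?case by (simp add: Ycat_Nil)
next
  case (Cons a u) then show ?case using Ycat_app[of Y "[a]" u] Ycat_single[of "[a]" Y] by simp
qed

lemma coset_closure:
  fixes K :: "nat list \<Rightarrow> bool" and T Y :: "nat list set"
  assumes Kapp: "\<And>x y. K x \<Longrightarrow> K y \<Longrightarrow> K (x @ y)"
    and step: "\<And>\<tau> y. \<tau> \<in> T \<Longrightarrow> y \<in> Y \<Longrightarrow> \<exists>x \<tau>'. K x \<and> \<tau>' \<in> T \<and> Deq n (\<tau> @ y) (x @ \<tau>')"
    and gen: "\<And>u. (\<exists>x \<tau>. K x \<and> \<tau> \<in> T \<and> Deq n u (x @ \<tau>)) \<Longrightarrow> \<exists>ys. set ys \<subseteq> Y \<and> Deq n u (concat ys)"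
    and u: "\<exists>x \<tau>. K x \<and> \<tau> \<in> T \<and> Deq n u (x @ \<tau>)"
    and v: "\<exists>x \<tau>. K x \<and> \<tau> \<in> T \<and> Deq n v (x @ \<tau>)"
  shows "\<exists>x \<tau>. K x \<and> \<tau> \<in> T \<and> Deq n (u @ v) (x @ \<tau>)"
proof -
  define S where "S = (\<lambda>u. \<exists>x \<tau>. K x \<and> \<tau> \<in> T \<and> Deq n u (x @ \<tau>))"
  have S1: "S (u @ y)" if su: "S u" and yY: "y \<in> Y" for u y
  proof -
    obtain x \<tau> where x: "K x" "\<tau> \<in> T" "Deq n u (x @ \<tau>)" using su unfolding S_def by blast
    obtain x' \<tau>' where x': "K x'" "\<tau>' \<in> T" "Deq n (\<tau> @ y) (x' @ \<tau>')" using step[OF x(2) yY] by blast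
    have "Deq n (u @ y) ((x @ \<tau>) @ y)" by (rule Deq_right[OF x(3)])
    also have "(x @ \<tau>) @ y = x @ (\<tau> @ y)" by simp
    also have "Deq n (x @ (\<tau> @ y)) (x @ (x' @ \<tau>'))" by (rule Deq_left[OF x'(3)])
    also have "x @ (x' @ \<tau>') = (x @ x') @ \<tau>'" by simp
    finally show ?thesis unfolding S_def using Kapp[OF x(1) x'(1)] x'(2) by blast
  qed
  have S2: "S (u @ concat ys)" if "S u" "set ys \<subseteq> Y" for u ys
    using that
  proof (induction ys arbitrary: u)
    case Nil then show ?case by simp
  next
    case (Cons y ys)
    have "S (u @ y)" by (rule S1) (use Cons.prems in auto)
    then have "S ((u @ y) @ concat ys)" by (rule Cons.IH) (use Cons.prems in auto)
    then show ?case by simp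
  qed
  obtain ys where ys: "set ys \<subseteq> Y" "Deq n v (concat ys)" using gen[OF v] by blast
  have "S (u @ concat ys)" by (rule S2) (use u ys S_def in auto)
  then obtain x \<tau> where x: "K x" "\<tau> \<in> T" "Deq n (u @ concat ys) (x @ \<tau>)" unfolding S_def by blast
  have "Deq n (u @ v) (u @ concat ys)" by (rule Deq_left[OF ys(2)])
  also note x(3)
  finally show ?thesis using x(1,2) by blast
qed

lemma coset_rev:
  fixes K :: "nat list \<Rightarrow> bool" and T Y :: "nat list set"
  assumes Kapp: "\<And>x y. K x \<Longrightarrow> K y \<Longrightarrow> K (x @ y)"
    and step: "\<And>\<tau> y. \<tau> \<in> T \<Longrightarrow> y \<in> Y \<Longrightarrow> \<exists>x \<tau>'. K x \<and> \<tau>' \<in> T \<and> Deq n (\<tau> @ y) (x @ \<tau>')"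
    and gen: "\<And>u. (\<exists>x \<tau>. K x \<and> \<tau> \<in> T \<and> Deq n u (x @ \<tau>)) \<Longrightarrow> \<exists>ys. set ys \<subseteq> Y \<and> Deq n u (concat ys)"
    and revY: "\<And>y. y \<in> Y \<Longrightarrow> \<exists>x \<tau>. K x \<and> \<tau> \<in> T \<and> Deq n (rev y) (x @ \<tau>)"
    and nil: "\<exists>x \<tau>. K x \<and> \<tau> \<in> T \<and> Deq n [] (x @ \<tau>)"
    and u: "\<exists>x \<tau>. K x \<and> \<tau> \<in> T \<and> Deq n u (x @ \<tau>)"
  shows "\<exists>x \<tau>. K x \<and> \<tau> \<in> T \<and> Deq n (rev u) (x @ \<tau>)"
proof -
  define S where "S = (\<lambda>u. \<exists>x \<tau>. K x \<and> \<tau> \<in> T \<and> Deq n u (x @ \<tau>))"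
  have cl: "S (a @ b)" if "S a" "S b" for a b
    using coset_closure[OF Kapp step gen] that unfolding S_def by blast
  have R: "S (concat (map rev (rev ys)))" if "set ys \<subseteq> Y" for ys
    using that
  proof (induction ys)
    case Nil then show ?case using nil S_def by simp
  next
    case (Cons y ys)
    have "S (concat (map rev (rev ys)) @ rev y)"
      by (rule cl) (use Cons revY S_def in auto)
    then show ?case by simp
  qed
  obtain ys where ys: "set ys \<subseteq> Y" "Deq n u (concat ys)" using gen[OF u] by blast
  have e: "rev (concat ys) = concat (map rev (rev ys))" by (simp add: rev_concat)
  obtain x \<tau> where x: "K x" "\<tau> \<in> T" "Deq n (concat (map rev (rev ys))) (x @ \<tau>)"
    using R[OF ys(1)] unfolding S_def by blast
  have "Deq n (rev u) (rev (concat ys))" by (rule Deq_rev[OF ys(2)])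
  also have "rev (concat ys) = concat (map rev (rev ys))" by (rule e)
  also note x(3)
  finally show ?thesis using x(1,2) by blast
qed


definition NW :: "nat \<Rightarrow> nat list set" where
  "NW k = {normal_word k j i | j i. (\<forall>k'\<in>{1..k}. j k' \<le> 1) \<and> (\<forall>k'\<in>{2..k}. i k' \<le> k' - 1)}"

lemma H_set_NW: "H_set n m = Dclass n ` NW m"
  unfolding H_set_def NW_def by blast

lemma normal_word_Suc: "normal_word (Suc k) j i = normal_word k j i @
   (if 2 \<le> Suc k then word_pow (t_word (Suc k)) (i (Suc k)) else []) @ word_pow (w_word (Suc k)) (j (Suc k))"
  unfolding normal_word_def by simp

lemma normal_word_0: "normal_word 0 j i = []" unfolding normal_word_def by simp

lemma normal_word_cong: "(\<And>k'. 1 \<le> k' \<Longrightarrow> k' \<le> k \<Longrightarrow> j k' = j' k' \<and> i k' = i' k') \<Longrightarrow> normal_word k j i = normal_word k j' i'"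
  unfolding normal_word_def by (intro arg_cong[where f = concat] map_cong) auto

lemma word_pow_Suc0[simp]: "word_pow u (Suc 0) = u" by (simp add: word_pow_def)

lemma t_word_1: "t_word (Suc 0) = []" by (simp add: t_word_def)

lemma NW_0: "NW 0 = {[]}" unfolding NW_def by (auto simp: normal_word_0)

lemma NW_Suc: "NW (Suc k) = {x @ word_pow (t_word (Suc k)) a @ word_pow (w_word (Suc k)) b | x a b. x \<in> NW k \<and> a \<le> k \<and> b \<le> 1}"
proof (intro equalityI subsetI)
  fix u assume "u \<in> NW (Suc k)"
  then obtain j i where u: "u = normal_word (Suc k) j i" and b: "\<forall>k'\<in>{1..Suc k}. j k' \<le> 1" "\<forall>k'\<in>{2..Suc k}. i k' \<le> k' - 1"
    unfolding NW_def by blast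
  have x: "normal_word k j i \<in> NW k" unfolding NW_def using b by force
  show "u \<in> {x @ word_pow (t_word (Suc k)) a @ word_pow (w_word (Suc k)) b | x a b. x \<in> NW k \<and> a \<le> k \<and> b \<le> 1}"
  proof (cases "2 \<le> Suc k")
    case True
    have "u = normal_word k j i @ word_pow (t_word (Suc k)) (i (Suc k)) @ word_pow (w_word (Suc k)) (j (Suc k))"
      using u True normal_word_Suc[of k j i] by simp
    moreover have "i (Suc k) \<le> k" using b(2) True by (metis atLeastAtMost_iff diff_Suc_1 order_refl)
    moreover have "j (Suc k) \<le> 1" using b True by auto
    ultimately show ?thesis using x by blast
  next
    case False
    then have k0: "k = 0" by simp
    have "u = normal_word k j i @ word_pow (t_word (Suc k)) 0 @ word_pow (w_word (Suc k)) (j (Suc k))"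
      using u k0 normal_word_Suc[of k j i] by simp
    moreover have "(0::nat) \<le> k" "j (Suc k) \<le> 1" using b by auto
    ultimately show ?thesis using x by blast
  qed
next
  fix u assume "u \<in> {x @ word_pow (t_word (Suc k)) a @ word_pow (w_word (Suc k)) b | x a b. x \<in> NW k \<and> a \<le> k \<and> b \<le> 1}"
  then obtain x a b where u: "u = x @ word_pow (t_word (Suc k)) a @ word_pow (w_word (Suc k)) b" and x: "x \<in> NW k" and ab: "a \<le> k" "b \<le> 1"
    by blast
  obtain j i where xj: "x = normal_word k j i" and bd: "\<forall>k'\<in>{1..k}. j k' \<le> 1" "\<forall>k'\<in>{2..k}. i k' \<le> k' - 1"
    using x unfolding NW_def by blast
  define j' where "j' = j(Suc k := b)"
  define i' where "i' = i(Suc k := a)"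
  have e: "normal_word k j' i' = normal_word k j i"
    by (rule normal_word_cong) (auto simp: j'_def i'_def)
  have "u = normal_word (Suc k) j' i'"
  proof (cases "2 \<le> Suc k")
    case True then show ?thesis using u xj e normal_word_Suc[of k j' i'] by (simp add: j'_def i'_def)
  next
    case False then have "k = 0" by simp
    then show ?thesis using u xj e normal_word_Suc[of k j' i'] by (simp add: j'_def i'_def t_word_1)
  qed
  moreover have "\<forall>k'\<in>{1..Suc k}. j' k' \<le> 1" "\<forall>k'\<in>{2..Suc k}. i' k' \<le> k' - 1"
    using bd ab by (auto simp: j'_def i'_def le_Suc_eq)
  ultimately show "u \<in> NW (Suc k)" unfolding NW_def by blast
qed

lemma NW_SucI: "x \<in> NW k \<Longrightarrow> a \<le> k \<Longrightarrow> b \<le> 1 \<Longrightarrow> x @ word_pow (t_word (Suc k)) a @ word_pow (w_word (Suc k)) b \<in> NW (Suc k)"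
  unfolding NW_Suc by blast

lemma NW_Nil: "[] \<in> NW k"
proof (induction k)
  case 0 then show ?case by (simp add: NW_0)
next
  case (Suc k) then show ?case using NW_SucI[of "[]" k 0 0] by simp
qed

lemma NW_mono1: "x \<in> NW k \<Longrightarrow> x \<in> NW (Suc k)"
  using NW_SucI[of x k 0 0] by simp

lemma NW_mono: "x \<in> NW k \<Longrightarrow> k \<le> l \<Longrightarrow> x \<in> NW l"
  by (induction l) (auto simp: le_Suc_eq intro: NW_mono1)

lemma t_NW: "1 \<le> j \<Longrightarrow> j \<le> k \<Longrightarrow> t_word j \<in> NW k"
proof -
  assume a: "1 \<le> j" "j \<le> k"
  then obtain j0 where j0: "j = Suc j0" by (cases j) auto
  show ?thesis
  proof (cases "j0 = 0")
    case True then show ?thesis using j0 NW_Nil by (simp add: t_word_1)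
  next
    case False
    have "[] @ word_pow (t_word (Suc j0)) 1 @ word_pow (w_word (Suc j0)) 0 \<in> NW (Suc j0)"
      by (rule NW_SucI) (use False NW_Nil in auto)
    then show ?thesis using j0 a NW_mono by auto
  qed
qed

lemma w_NW: "1 \<le> j \<Longrightarrow> j \<le> k \<Longrightarrow> w_word j \<in> NW k"
proof -
  assume a: "1 \<le> j" "j \<le> k"
  then obtain j0 where j0: "j = Suc j0" by (cases j) auto
  have "[] @ word_pow (t_word (Suc j0)) 0 @ word_pow (w_word (Suc j0)) 1 \<in> NW (Suc j0)"
    by (rule NW_SucI) (use NW_Nil in auto)
  then show ?thesis using j0 a NW_mono by auto
qed

lemma NW_letters: "x \<in> NW k \<Longrightarrow> set x \<subseteq> {..k}"
proof (induction k arbitrary: x)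
  case 0 then show ?case by (simp add: NW_0)
next
  case (Suc k)
  then obtain y a b where x: "x = y @ word_pow (t_word (Suc k)) a @ word_pow (w_word (Suc k)) b" "y \<in> NW k"
    unfolding NW_Suc by blast
  have "set y \<subseteq> {..Suc k}" using Suc.IH[OF x(2)] by auto
  moreover have "set (word_pow (t_word (Suc k)) a) \<subseteq> {..Suc k}" using set_word_pow set_t by fastforce
  moreover have "set (word_pow (w_word (Suc k)) b) \<subseteq> {..Suc k}" using set_word_pow set_w by fastforce
  ultimately show ?case using x(1) by auto
qed

lemma NW_Ycat: assumes "\<And>j. 1 \<le> j \<Longrightarrow> j \<le> k \<Longrightarrow> Ycat Y (t_word j) \<and> Ycat Y (w_word j)"
  shows "x \<in> NW k \<Longrightarrow> Ycat Y x"
  using assms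
proof (induction k arbitrary: x)
  case 0 then show ?case by (simp add: NW_0 Ycat_Nil)
next
  case (Suc k)
  then obtain y a b where x: "x = y @ word_pow (t_word (Suc k)) a @ word_pow (w_word (Suc k)) b" "y \<in> NW k"
    unfolding NW_Suc by blast
  have "Ycat Y y" using Suc.IH[OF x(2)] Suc.prems by auto
  moreover have "Ycat Y (t_word (Suc k))" "Ycat Y (w_word (Suc k))" using Suc.prems(2)[of "Suc k"] by auto
  ultimately show ?case using x(1) by (simp add: Ycat_app Ycat_pow)
qed

definition inH :: "nat \<Rightarrow> nat \<Rightarrow> nat list \<Rightarrow> bool" where
  "inH n k u \<longleftrightarrow> (\<exists>x\<in>NW k. Deq n u x)"

lemma inH_Deq: "Deq n u v \<Longrightarrow> inH n k v \<Longrightarrow> inH n k u"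
  unfolding inH_def by (blast intro: Deq.Deq_trans)

lemma inH_NW: "x \<in> NW k \<Longrightarrow> inH n k x"
  unfolding inH_def by (blast intro: Deq.Deq_refl)

lemma inH_mono: "inH n k u \<Longrightarrow> k \<le> l \<Longrightarrow> inH n l u"
  unfolding inH_def using NW_mono by blast


definition zz :: "nat \<Rightarrow> nat list" where "zz p = (if p \<le> 1 then [] else w_word (p - 1))"
definition sig :: "nat \<Rightarrow> nat \<Rightarrow> nat" where "sig k p = (if p < k then p + 1 else 1)"

lemma zz_letters: "p \<le> n \<Longrightarrow> set (zz p) \<subseteq> {..<n}"
  using set_w[of "p - 1"] by (auto simp: zz_def)

lemma zz_comm: assumes "p \<le> n" shows "Deq n ([1,0] @ zz p) (zz p @ [1,0])"
proof (cases "p \<le> 1")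
  case True then show ?thesis by (simp add: zz_def Deq.Deq_refl)
next
  case False then show ?thesis unfolding zz_def using wW1[of "p - 1" n] assms by simp
qed

lemma ZC1: assumes "2 \<le> k" "k < n" "1 \<le> p" "p \<le> k"
  shows "Deq n ([1..<k] @ zz p) ([1,0] @ zz (sig k p) @ [1..<k])"
proof -
  consider "p = 1" | "2 \<le> p \<and> p < k" | "p = k" using assms by linarith
  then show ?thesis
  proof cases
    case 1
    have "zz (sig k p) = [1,0]" using 1 assms by (simp add: zz_def sig_def w_1 w_1s)
    moreover have "Deq n [1..<k] ([1,0] @ [1,0] @ [1..<k])"
      using Deq_right[OF W1W1[of n], of "[1..<k]"] assms by (simp add: Deq_symI)
    ultimately show ?thesis using 1 by (simp add: zz_def)
  next
    case 2
    have "Deq n ([1..<k] @ w_word (p - 1)) ([1,0] @ w_word (p - 1 + 1) @ [1..<k])"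
      by (rule c_w) (use 2 assms in auto)
    then show ?thesis using 2 by (simp add: zz_def sig_def)
  next
    case 3
    have "Deq n ([1..<Suc (k - 1)] @ w_word (k - 1)) ([1,0] @ [1..<Suc (k - 1)])"
      by (rule c_wlast) (use assms in auto)
    then show ?thesis using 3 assms by (simp add: zz_def sig_def)
  qed
qed

lemma sig_range: "1 \<le> p \<Longrightarrow> p \<le> k \<Longrightarrow> 1 \<le> sig k p \<and> sig k p \<le> k"
  unfolding sig_def by auto

lemma sigpow_range: "1 \<le> p \<Longrightarrow> p \<le> k \<Longrightarrow> 1 \<le> (sig k ^^ a) p \<and> (sig k ^^ a) p \<le> k"
  by (induction a) (auto simp: sig_def)

lemma ZC: assumes "2 \<le> k" "k < n" "1 \<le> p" "p \<le> k" "1 \<le> q" "q \<le> k"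
  shows "Deq n (word_pow [1..<k] a @ zz p @ zz q) (zz ((sig k ^^ a) p) @ zz ((sig k ^^ a) q) @ word_pow [1..<k] a)"
proof (induction a)
  case 0 then show ?case by (simp add: Deq.Deq_refl)
next
  case (Suc a)
  let ?c = "[1..<k]"
  let ?p = "(sig k ^^ a) p" and ?q = "(sig k ^^ a) q"
  have rp: "1 \<le> ?p" "?p \<le> k" using sigpow_range assms by auto
  have rq: "1 \<le> ?q" "?q \<le> k" using sigpow_range assms by auto
  have rp': "sig k ?p \<le> k" "sig k ?q \<le> k" using sig_range rp rq by auto
  have "word_pow ?c (Suc a) @ zz p @ zz q = ?c @ (word_pow ?c a @ zz p @ zz q)" by (simp add: word_pow_Suc)
  also have "Deq n (?c @ (word_pow ?c a @ zz p @ zz q)) (?c @ (zz ?p @ zz ?q @ word_pow ?c a))"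
    by (rule Deq_left, rule Suc.IH)
  also have "?c @ (zz ?p @ zz ?q @ word_pow ?c a) = (?c @ zz ?p) @ zz ?q @ word_pow ?c a" by simp
  also have "Deq n ((?c @ zz ?p) @ zz ?q @ word_pow ?c a) (([1,0] @ zz (sig k ?p) @ ?c) @ zz ?q @ word_pow ?c a)"
    by (rule Deq_right, rule ZC1) (use assms rp in auto)
  also have "([1,0] @ zz (sig k ?p) @ ?c) @ zz ?q @ word_pow ?c a = ([1,0] @ zz (sig k ?p)) @ (?c @ zz ?q) @ word_pow ?c a" by simp
  also have "Deq n (([1,0] @ zz (sig k ?p)) @ (?c @ zz ?q) @ word_pow ?c a) (([1,0] @ zz (sig k ?p)) @ ([1,0] @ zz (sig k ?q) @ ?c) @ word_pow ?c a)"
    by (rule Deq_cong, rule ZC1) (use assms rq in auto)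
  also have "([1,0] @ zz (sig k ?p)) @ ([1,0] @ zz (sig k ?q) @ ?c) @ word_pow ?c a = [1,0] @ (zz (sig k ?p) @ [1,0]) @ zz (sig k ?q) @ (?c @ word_pow ?c a)" by simp
  also have "Deq n ([1,0] @ (zz (sig k ?p) @ [1,0]) @ zz (sig k ?q) @ (?c @ word_pow ?c a)) ([1,0] @ ([1,0] @ zz (sig k ?p)) @ zz (sig k ?q) @ (?c @ word_pow ?c a))"
    by (rule Deq_cong, rule Deq_symI, rule zz_comm) (use rp' assms in auto)
  also have "[1,0] @ ([1,0] @ zz (sig k ?p)) @ zz (sig k ?q) @ (?c @ word_pow ?c a) = ([1,0] @ [1,0]) @ zz (sig k ?p) @ zz (sig k ?q) @ (?c @ word_pow ?c a)" by simp
  also have "Deq n (([1,0] @ [1,0]) @ zz (sig k ?p) @ zz (sig k ?q) @ (?c @ word_pow ?c a)) ([] @ zz (sig k ?p) @ zz (sig k ?q) @ (?c @ word_pow ?c a))"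
    by (rule Deq_right, rule W1W1) (use assms in auto)
  finally show ?case by (simp add: word_pow_Suc)
qed

lemma t_Suc: "1 \<le> i \<Longrightarrow> t_word (Suc i) = t_word i @ [i]"
  by (simp add: t_word_def)

lemma t_letters: "k \<le> n \<Longrightarrow> set (t_word k) \<subseteq> {..<n}"
  using set_t[of k] by auto


declare w_1s[simp] w_1[simp]

lemma c_split: "1 \<le> k0 \<Longrightarrow> [1..<Suc k0] = t_word k0 @ [k0]"
  by (simp add: t_word_def)

lemma cs2: assumes "1 \<le> i" "i + a = k0" "Suc k0 \<le> n"
  shows "Deq n (word_pow [1..<Suc k0] a @ [i]) (rev (t_word k0) @ word_pow [1..<Suc k0] (Suc a))"
proof -
  let ?c = "[1..<Suc k0]"
  have k1: "1 \<le> k0" using assms by auto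
  have st: "set (t_word k0) \<subseteq> {..<n}" using t_letters[of k0 n] assms by auto
  have "Deq n (word_pow ?c a @ [i]) ([i + a] @ word_pow ?c a)" by (rule shift_pow) (use assms in auto)
  also have "[i + a] @ word_pow ?c a = [] @ [k0] @ word_pow ?c a" using assms by simp
  also have "Deq n ([] @ [k0] @ word_pow ?c a) ((rev (t_word k0) @ t_word k0) @ [k0] @ word_pow ?c a)"
    by (rule Deq_right, rule Deq_symI, rule cancel'[OF st])
  also have "(rev (t_word k0) @ t_word k0) @ [k0] @ word_pow ?c a = rev (t_word k0) @ word_pow ?c (Suc a)"
    using c_split[OF k1] by (simp add: word_pow_Suc)
  finally show ?thesis .
qed

lemma cs3: assumes "1 \<le> i" "i + a = Suc k0" "i + 1 \<le> k0" "Suc k0 \<le> n"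
  shows "Deq n (word_pow [1..<Suc k0] a @ [i]) (t_word k0 @ word_pow [1..<Suc k0] (a - 1))"
proof -
  let ?c = "[1..<Suc k0]"
  have k1: "1 \<le> k0" using assms by auto
  obtain a0 where a0: "a = Suc a0" using assms by (cases a) auto
  have "word_pow ?c a @ [i] = ?c @ (word_pow ?c a0 @ [i])" using a0 by (simp add: word_pow_Suc)
  also have "Deq n (?c @ (word_pow ?c a0 @ [i])) (?c @ ([i + a0] @ word_pow ?c a0))"
    by (rule Deq_left, rule shift_pow) (use assms a0 in auto)
  also have "?c @ ([i + a0] @ word_pow ?c a0) = t_word k0 @ [k0, k0] @ word_pow ?c a0"
    using c_split[OF k1] assms a0 by simp
  also have "Deq n (t_word k0 @ [k0, k0] @ word_pow ?c a0) (t_word k0 @ [] @ word_pow ?c a0)"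
    by (rule Deq_cong, rule Deq_gg) (use assms in auto)
  finally show ?thesis using a0 by simp
qed

lemma cs4: assumes "1 \<le> i" "Suc k0 < i + a" "a \<le> k0" "i + 1 \<le> k0" "Suc k0 \<le> n"
  shows "Deq n (word_pow [1..<Suc k0] a @ [i]) ([i + a - Suc k0] @ word_pow [1..<Suc k0] a)"
proof -
  let ?c = "[1..<Suc k0]"
  let ?r = "i + a - Suc k0"
  have sh: "Deq n (word_pow ?c (Suc k0 - a) @ [?r]) ([?r + (Suc k0 - a)] @ word_pow ?c (Suc k0 - a))"
    by (rule shift_pow) (use assms in auto)
  have e: "?r + (Suc k0 - a) = i" using assms by auto
  have ord: "Deq n (word_pow ?c (Suc k0 - a) @ word_pow ?c a) []"
  proof -
    have "word_pow ?c (Suc k0 - a) @ word_pow ?c a = word_pow ?c (Suc k0)"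
      using word_pow_add[of ?c "Suc k0 - a" a] assms by simp
    also have "Deq n (word_pow ?c (Suc k0)) []"
    proof -
      have "Deq n (word_pow [1..<Suc k0] (Suc (k0))) []" by (rule cycle_order) (use assms in auto)
      then show ?thesis .
    qed
    finally show ?thesis .
  qed
  have ord2: "Deq n (word_pow ?c a @ word_pow ?c (Suc k0 - a)) []"
  proof -
    have "word_pow ?c a @ word_pow ?c (Suc k0 - a) = word_pow ?c (Suc k0)"
      using word_pow_add[of ?c a "Suc k0 - a"] assms by simp
    also have "Deq n (word_pow ?c (Suc k0)) []" by (rule cycle_order) (use assms in auto)
    finally show ?thesis .
  qed
  have "Deq n (word_pow ?c a @ [i]) (word_pow ?c a @ [i] @ (word_pow ?c (Suc k0 - a) @ word_pow ?c a))"
    using Deq_left[OF Deq_left[OF ord, of "[i]"], of "word_pow ?c a"] by (simp add: Deq_symI)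
  also have "word_pow ?c a @ [i] @ (word_pow ?c (Suc k0 - a) @ word_pow ?c a) = word_pow ?c a @ ([?r + (Suc k0 - a)] @ word_pow ?c (Suc k0 - a)) @ word_pow ?c a"
    using e by simp
  also have "Deq n (word_pow ?c a @ ([?r + (Suc k0 - a)] @ word_pow ?c (Suc k0 - a)) @ word_pow ?c a) (word_pow ?c a @ (word_pow ?c (Suc k0 - a) @ [?r]) @ word_pow ?c a)"
    by (rule Deq_cong, rule Deq_symI, rule sh)
  also have "word_pow ?c a @ (word_pow ?c (Suc k0 - a) @ [?r]) @ word_pow ?c a = (word_pow ?c a @ word_pow ?c (Suc k0 - a)) @ [?r] @ word_pow ?c a" by simp
  also have "Deq n ((word_pow ?c a @ word_pow ?c (Suc k0 - a)) @ [?r] @ word_pow ?c a) ([] @ [?r] @ word_pow ?c a)"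
    by (rule Deq_right, rule ord2)
  finally show ?thesis by simp
qed


definition TA :: "nat \<Rightarrow> nat list set" where "TA k0 = {word_pow (t_word (Suc k0)) a | a. a \<le> k0}"
definition SA :: "nat \<Rightarrow> nat \<Rightarrow> nat list \<Rightarrow> bool" where
  "SA n k0 u \<longleftrightarrow> (\<exists>x \<tau>. inH n k0 x \<and> \<tau> \<in> TA k0 \<and> Deq n u (x @ \<tau>))"

lemma Ks_lemma:
  assumes n: "Suc k0 < n"
    and IHc: "\<And>u v. inH n k0 u \<Longrightarrow> inH n k0 v \<Longrightarrow> inH n k0 (u @ v)"
    and IHr: "\<And>u. inH n k0 u \<Longrightarrow> inH n k0 (rev u)"
    and i: "1 \<le> i" "i + 1 \<le> k0"
  shows "inH n k0 [i]"
proof -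
  have st: "set (t_word i) \<subseteq> {..<n}" using t_letters[of i n] i n by auto
  have "Deq n [i] ((rev (t_word i) @ t_word i) @ [i])"
    using Deq_right[OF cancel'[OF st], of "[i]"] by (simp add: Deq_symI)
  also have "(rev (t_word i) @ t_word i) @ [i] = rev (t_word i) @ t_word (Suc i)" using t_Suc[OF i(1)] by simp
  finally have "Deq n [i] (rev (t_word i) @ t_word (Suc i))" .
  moreover have "inH n k0 (rev (t_word i) @ t_word (Suc i))"
    by (rule IHc, rule IHr) (use i in \<open>auto intro!: inH_NW t_NW\<close>)
  ultimately show "inH n k0 [i]" by (rule inH_Deq)
qed

lemma stepA:
  assumes n: "Suc k0 < n"
    and IHc: "\<And>u v. inH n k0 u \<Longrightarrow> inH n k0 v \<Longrightarrow> inH n k0 (u @ v)"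
    and IHr: "\<And>u. inH n k0 u \<Longrightarrow> inH n k0 (rev u)"
    and u: "SA n k0 u" and v: "SA n k0 v"
  shows "SA n k0 (u @ v)"
proof -
  let ?c = "[1..<Suc k0]"
  have tc: "t_word (Suc k0) = ?c" by (simp add: t_word_def)
  have KF1: "inH n k0 []" by (rule inH_NW[OF NW_Nil])
  have KF2: "inH n k0 (t_word j)" if "1 \<le> j" "j \<le> k0" for j using that by (intro inH_NW t_NW)
  have KF3: "inH n k0 (rev (t_word j))" if "1 \<le> j" "j \<le> k0" for j using KF2[OF that] IHr by blast
  have KF4: "inH n k0 (zz p)" if "1 \<le> p" "p \<le> Suc k0" for p
    using KF1 that by (auto simp: zz_def intro!: inH_NW w_NW)
  have KF5: "inH n k0 [i]" if "1 \<le> i" "i + 1 \<le> k0" for i by (rule Ks_lemma[OF n IHc IHr that])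
  define YA where "YA = {[i] | i. 1 \<le> i \<and> i + 2 \<le> Suc k0} \<union> {?c} \<union> (if 2 \<le> Suc k0 then {[1,0], w_word k0} else {})"
  have TAc: "word_pow ?c a \<in> TA k0" if "a \<le> k0" for a using that tc unfolding TA_def by auto
  have step: "\<exists>x \<tau>'. inH n k0 x \<and> \<tau>' \<in> TA k0 \<and> Deq n (\<tau> @ y) (x @ \<tau>')" if tau: "\<tau> \<in> TA k0" and y: "y \<in> YA" for \<tau> y
  proof -
    obtain a where a: "\<tau> = word_pow ?c a" "a \<le> k0" using tau tc unfolding TA_def by auto
    consider (C) "y = ?c" | (S) i where "y = [i]" "1 \<le> i" "i + 2 \<le> Suc k0" | (W1) "y = [1,0]" "1 \<le> k0" | (Wk) "y = w_word k0" "1 \<le> k0"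
      using y unfolding YA_def by (auto split: if_splits)
    then show ?thesis
    proof cases
      case C
      show ?thesis
      proof (cases "a < k0")
        case True
        have "Deq n (\<tau> @ y) ([] @ word_pow ?c (Suc a))" using a C by (simp add: word_pow_Suc' Deq.Deq_refl)
        moreover have "word_pow ?c (Suc a) \<in> TA k0" using True by (intro TAc) simp
        ultimately show ?thesis using KF1 by blast
      next
        case False
        then have "a = k0" using a by simp
        then have "Deq n (\<tau> @ y) ([] @ word_pow ?c 0)"
          using a C cycle_order[of 1 k0 "Suc k0" n] n by (simp add: word_pow_Suc')
        then show ?thesis using KF1 TAc[of 0] by blast
      qed
    next
      case (S i)
      consider "i + a < k0" | "i + a = k0" | "i + a = Suc k0" | "Suc k0 < i + a" by linarith
      then show ?thesis
      proof cases
        case 1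
        have "Deq n (\<tau> @ y) ([i + a] @ word_pow ?c a)" unfolding a S by (rule shift_pow) (use 1 S n in auto)
        moreover have "inH n k0 [i + a]" by (rule KF5) (use 1 S in auto)
        ultimately show ?thesis using TAc[OF a(2)] by blast
      next
        case 2
        have "Deq n (\<tau> @ y) (rev (t_word k0) @ word_pow ?c (Suc a))" unfolding a S by (rule cs2) (use 2 S n in auto)
        moreover have "inH n k0 (rev (t_word k0))" by (rule KF3) (use 2 S in auto)
        moreover have "word_pow ?c (Suc a) \<in> TA k0" using 2 S by (intro TAc) simp
        ultimately show ?thesis by blast
      next
        case 3
        have "Deq n (\<tau> @ y) (t_word k0 @ word_pow ?c (a - 1))" unfolding a S by (rule cs3) (use 3 S n in auto)
        moreover have "inH n k0 (t_word k0)" by (rule KF2) (use 3 S in auto)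
        moreover have "word_pow ?c (a - 1) \<in> TA k0" using a by (intro TAc) simp
        ultimately show ?thesis by blast
      next
        case 4
        have "Deq n (\<tau> @ y) ([i + a - Suc k0] @ word_pow ?c a)" unfolding a S by (rule cs4) (use 4 S n a in auto)
        moreover have "inH n k0 [i + a - Suc k0]" by (rule KF5) (use 4 S a in auto)
        ultimately show ?thesis using TAc[OF a(2)] by blast
      qed
    next
      case W1
      have "Deq n (word_pow ?c a @ zz 1 @ zz 2) (zz ((sig (Suc k0) ^^ a) 1) @ zz ((sig (Suc k0) ^^ a) 2) @ word_pow ?c a)"
        by (rule ZC) (use W1 n in auto)
      moreover have "zz 1 @ zz 2 = [1,0]" by (simp add: zz_def w_1)
      moreover have "inH n k0 (zz ((sig (Suc k0) ^^ a) 1) @ zz ((sig (Suc k0) ^^ a) 2))"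
        by (rule IHc; rule KF4) (use sigpow_range[of 1 "Suc k0" a] sigpow_range[of 2 "Suc k0" a] W1 in auto)
      ultimately show ?thesis using a W1 TAc[OF a(2)]
        by (metis append.assoc)
    next
      case Wk
      have "Deq n (word_pow ?c a @ zz 1 @ zz (Suc k0)) (zz ((sig (Suc k0) ^^ a) 1) @ zz ((sig (Suc k0) ^^ a) (Suc k0)) @ word_pow ?c a)"
        by (rule ZC) (use Wk n in auto)
      moreover have "zz 1 @ zz (Suc k0) = w_word k0" using Wk by (simp add: zz_def)
      moreover have "inH n k0 (zz ((sig (Suc k0) ^^ a) 1) @ zz ((sig (Suc k0) ^^ a) (Suc k0)))"
        by (rule IHc; rule KF4) (use sigpow_range[of 1 "Suc k0" a] sigpow_range[of "Suc k0" "Suc k0" a] Wk in auto)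
      ultimately show ?thesis using a Wk TAc[OF a(2)]
        by (metis append.assoc)
    qed
  qed
  have gen: "\<exists>ys. set ys \<subseteq> YA \<and> Deq n w (concat ys)" if ex: "\<exists>x \<tau>. inH n k0 x \<and> \<tau> \<in> TA k0 \<and> Deq n w (x @ \<tau>)" for w
  proof -
    obtain x \<tau> where x: "inH n k0 x" "\<tau> \<in> TA k0" "Deq n w (x @ \<tau>)" using ex by blast
    obtain x0 where x0: "x0 \<in> NW k0" "Deq n x x0" using x(1) unfolding inH_def by blast
    obtain a where a: "\<tau> = word_pow ?c a" using x(2) tc unfolding TA_def by auto
    have Yt: "Ycat YA (t_word j)" if "1 \<le> j" "j \<le> k0" for j
      by (rule Ycat_letters) (use that in \<open>auto simp: t_word_def YA_def\<close>)
    have Yw: "Ycat YA (w_word j)" if "1 \<le> j" "j \<le> k0" for j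
    proof (cases "j = k0")
      case True then show ?thesis using that by (intro Ycat_single) (auto simp: YA_def)
    next
      case False
      have "Ycat YA (rev [2..<j+1] @ [1,0] @ [2..<j+1])"
        using that False
        by (intro Ycat_app Ycat_letters Ycat_single) (auto simp: YA_def)
      then show ?thesis using w_alt[OF that(1)] by simp
    qed
    have "Ycat YA x0" by (rule NW_Ycat[OF _ x0(1)]) (use Yt Yw in auto)
    moreover have "Ycat YA \<tau>" unfolding a by (intro Ycat_pow Ycat_single) (auto simp: YA_def)
    ultimately have "Ycat YA (x0 @ \<tau>)" by (rule Ycat_app)
    then obtain ys where ys: "set ys \<subseteq> YA" "x0 @ \<tau> = concat ys" unfolding Ycat_def by blast
    have "Deq n w (x @ \<tau>)" by (rule x(3))
    also have "Deq n (x @ \<tau>) (x0 @ \<tau>)" by (rule Deq_right[OF x0(2)])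
    finally show ?thesis using ys by auto
  qed
  show ?thesis
    using coset_closure[of "inH n k0" "TA k0" YA n u v] IHc step gen u v unfolding SA_def by blast
qed


declare w_1s[simp] w_1[simp]

lemma stepB:
  assumes n: "Suc k0 < n"
    and IHc: "\<And>u v. inH n k0 u \<Longrightarrow> inH n k0 v \<Longrightarrow> inH n k0 (u @ v)"
    and IHr: "\<And>u. inH n k0 u \<Longrightarrow> inH n k0 (rev u)"
  shows "(\<forall>u v. inH n (Suc k0) u \<longrightarrow> inH n (Suc k0) v \<longrightarrow> inH n (Suc k0) (u @ v)) \<and>
         (\<forall>u. inH n (Suc k0) u \<longrightarrow> inH n (Suc k0) (rev u))"
proof -
  let ?c = "[1..<Suc k0]"
  let ?w = "w_word (Suc k0)"
  have tc: "t_word (Suc k0) = ?c" by (simp add: t_word_def)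
  define TB where "TB = {[], ?w}"
  define YB where "YB = {[i] | i. 1 \<le> i \<and> i + 1 \<le> Suc k0} \<union> {[1,0], ?w}"
  define SB where "SB = (\<lambda>u. \<exists>x \<tau>. SA n k0 x \<and> \<tau> \<in> TB \<and> Deq n u (x @ \<tau>))"
  have SAcl: "SA n k0 (x @ y)" if "SA n k0 x" "SA n k0 y" for x y by (rule stepA[OF n IHc IHr that])
  have TA0: "[] \<in> TA k0" unfolding TA_def by (rule CollectI, rule exI[of _ 0]) simp
  have SAK: "SA n k0 x" if "inH n k0 x" for x
    unfolding SA_def using that TA0 by (intro exI[of _ x] exI[of _ "[]"]) (simp add: Deq.Deq_refl)
  have SA_Deq: "SA n k0 x" if "Deq n x y" "SA n k0 y" for x y
    using that unfolding SA_def by (blast intro: Deq.Deq_trans)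
  have SAnil: "SA n k0 []" by (rule SAK, rule inH_NW[OF NW_Nil])
  have SA_t: "SA n k0 (t_word j)" if "1 \<le> j" "j \<le> Suc k0" for j
  proof (cases "j \<le> k0")
    case True then show ?thesis using that by (intro SAK inH_NW t_NW) auto
  next
    case False
    then have j: "j = Suc k0" using that by simp
    show ?thesis
    proof (cases "k0 = 0")
      case True then show ?thesis using j SAnil by (simp add: t_word_def)
    next
      case False
      have "word_pow ?c 1 \<in> TA k0" unfolding TA_def using False tc by (intro CollectI exI[of _ 1]) auto
      then show ?thesis unfolding SA_def using j tc inH_NW[OF NW_Nil]
        by (intro exI[of _ "[]"] exI[of _ "word_pow ?c 1"]) (auto simp: Deq.Deq_refl)
    qed
  qed
  have SA_s: "SA n k0 [i]" if i: "1 \<le> i" "i \<le> k0" for i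
  proof -
    have st: "set (t_word i) \<subseteq> {..<n}" using t_letters[of i n] i n by auto
    have "Deq n [i] ((rev (t_word i) @ t_word i) @ [i])"
      using Deq_right[OF cancel'[OF st], of "[i]"] by (simp add: Deq_symI)
    also have "(rev (t_word i) @ t_word i) @ [i] = rev (t_word i) @ t_word (Suc i)" using t_Suc[OF i(1)] by simp
    finally have "Deq n [i] (rev (t_word i) @ t_word (Suc i))" .
    moreover have "SA n k0 (rev (t_word i) @ t_word (Suc i))"
      by (rule SAcl, rule SAK, rule IHr, rule inH_NW, rule t_NW) (use i SA_t in auto)
    ultimately show ?thesis by (rule SA_Deq)
  qed
  have SA_W1: "SA n k0 [1,0]" if "1 \<le> k0" using that by (intro SAK inH_NW) (use w_NW[of 1 k0] in auto)
  have TBw: "?w \<in> TB" "[] \<in> TB" unfolding TB_def by auto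
  have SB_iff: "SB u \<longleftrightarrow> inH n (Suc k0) u" for u
  proof
    assume "SB u"
    then obtain x \<tau> where x: "SA n k0 x" "\<tau> \<in> TB" "Deq n u (x @ \<tau>)" unfolding SB_def by blast
    obtain x' \<tau>' where x': "inH n k0 x'" "\<tau>' \<in> TA k0" "Deq n x (x' @ \<tau>')" using x(1) unfolding SA_def by blast
    obtain x0 where x0: "x0 \<in> NW k0" "Deq n x' x0" using x'(1) unfolding inH_def by blast
    obtain a where a: "\<tau>' = word_pow ?c a" "a \<le> k0" using x'(2) tc unfolding TA_def by auto
    obtain b where b: "\<tau> = word_pow ?w b" "b \<le> 1"
    proof -
      from x(2) consider "\<tau> = []" | "\<tau> = ?w" unfolding TB_def by auto
      then show thesis
      proof cases
        case 1 then show thesis using that[of 0] by simp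
      next
        case 2 then show thesis using that[of 1] by simp
      qed
    qed
    have "Deq n u (x @ \<tau>)" by (rule x(3))
    also have "Deq n (x @ \<tau>) ((x' @ \<tau>') @ \<tau>)" by (rule Deq_right[OF x'(3)])
    also have "Deq n ((x' @ \<tau>') @ \<tau>) ((x0 @ \<tau>') @ \<tau>)" by (rule Deq_right, rule Deq_right[OF x0(2)])
    finally have "Deq n u (x0 @ word_pow (t_word (Suc k0)) a @ word_pow ?w b)" using a b tc by simp
    moreover have "x0 @ word_pow (t_word (Suc k0)) a @ word_pow ?w b \<in> NW (Suc k0)" by (rule NW_SucI) (use x0 a b in auto)
    ultimately show "inH n (Suc k0) u" unfolding inH_def by blast
  next
    assume "inH n (Suc k0) u"
    then obtain y where y: "y \<in> NW (Suc k0)" "Deq n u y" unfolding inH_def by blast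
    then obtain x0 a b where x0: "y = x0 @ word_pow ?c a @ word_pow ?w b" "x0 \<in> NW k0" "a \<le> k0" "b \<le> 1"
      unfolding NW_Suc using tc by auto
    have "SA n k0 (x0 @ word_pow ?c a)" unfolding SA_def TA_def using x0 tc
      by (intro exI[of _ x0] exI[of _ "word_pow ?c a"]) (auto simp: inH_NW Deq.Deq_refl)
    moreover have "word_pow ?w b \<in> TB" using x0(4) unfolding TB_def by (cases b) auto
    ultimately show "SB u" unfolding SB_def using y(2) x0(1) by (metis append.assoc)
  qed
  have step: "\<exists>x \<tau>'. SA n k0 x \<and> \<tau>' \<in> TB \<and> Deq n (\<tau> @ y) (x @ \<tau>')" if tau: "\<tau> \<in> TB" and y: "y \<in> YB" for \<tau> y
  proof -
    consider (S) i where "y = [i]" "1 \<le> i" "i \<le> k0" | (W1) "y = [1,0]" | (W) "y = ?w"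
      using y unfolding YB_def by auto
    note cases_y = this
    consider (E) "\<tau> = []" | (T) "\<tau> = ?w" using tau unfolding TB_def by auto
    then show ?thesis
    proof cases
      case E
      from cases_y show ?thesis
      proof cases
        case (S i) then show ?thesis using SA_s[of i] E TBw by (intro exI[of _ "[i]"] exI[of _ "[]"]) (auto simp: Deq.Deq_refl)
      next
        case W1
        show ?thesis
        proof (cases "k0 = 0")
          case True then show ?thesis using W1 E SAnil TBw by (intro exI[of _ "[]"] exI[of _ ?w]) (auto simp: Deq.Deq_refl)
        next
          case False then show ?thesis using W1 E SA_W1 TBw by (intro exI[of _ "[1,0]"] exI[of _ "[]"]) (auto simp: Deq.Deq_refl)
        qed
      next
        case W then show ?thesis using E SAnil TBw by (intro exI[of _ "[]"] exI[of _ ?w]) (auto simp: Deq.Deq_refl)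
      qed
    next
      case T
      from cases_y show ?thesis
      proof cases
        case (S i)
        show ?thesis
        proof (cases "i = 1")
          case False
          have "Deq n (?w @ [i]) ([i] @ ?w)" by (rule w_si) (use S False n in auto)
          then show ?thesis using T S SA_s[of i] TBw by blast
        next
          case True
          have "Deq n (?w @ [1]) ([1] @ [1,0] @ ?w)" by (rule w_s1) (use S True n in auto)
          moreover have "SA n k0 ([1] @ [1,0])" by (rule SAcl; (rule SA_s | rule SA_W1)) (use S True in auto)
          ultimately show ?thesis using T S True TBw by (metis append.assoc)
        qed
      next
        case W1
        show ?thesis
        proof (cases "k0 = 0")
          case True
          have "Deq n (?w @ y) []" using W1 True ww[of 1 n] n by simp
          then show ?thesis using T SAnil TBw by (intro exI[of _ "[]"] exI[of _ "[]"]) auto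
        next
          case False
          have "Deq n (?w @ [1,0]) ([1,0] @ ?w)" by (rule Deq_symI, rule wW1) (use n in auto)
          moreover have "SA n k0 [1,0]" using False by (intro SA_W1) simp
          ultimately show ?thesis using T W1 TBw by blast
        qed
      next
        case W
        have "Deq n (?w @ ?w) []" by (rule ww) (use n in auto)
        then show ?thesis using T W SAnil TBw by (intro exI[of _ "[]"] exI[of _ "[]"]) auto
      qed
    qed
  qed
  have gen: "\<exists>ys. set ys \<subseteq> YB \<and> Deq n u (concat ys)" if ex: "\<exists>x \<tau>. SA n k0 x \<and> \<tau> \<in> TB \<and> Deq n u (x @ \<tau>)" for u
  proof -
    have "inH n (Suc k0) u" using SB_iff ex unfolding SB_def by blast
    then obtain y where y: "y \<in> NW (Suc k0)" "Deq n u y" unfolding inH_def by blast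
    have Yt: "Ycat YB (t_word j)" if "1 \<le> j" "j \<le> Suc k0" for j
      by (rule Ycat_letters) (use that in \<open>auto simp: t_word_def YB_def\<close>)
    have Yw: "Ycat YB (w_word j)" if "1 \<le> j" "j \<le> Suc k0" for j
    proof (cases "j = Suc k0")
      case True then show ?thesis using that by (intro Ycat_single) (auto simp: YB_def)
    next
      case False
      have "Ycat YB (rev [2..<j+1] @ [1,0] @ [2..<j+1])"
        using that False
        by (intro Ycat_app Ycat_letters Ycat_single) (auto simp: YB_def)
      then show ?thesis using w_alt[OF that(1)] by simp
    qed
    have "Ycat YB y" by (rule NW_Ycat[OF _ y(1)]) (use Yt Yw in auto)
    then show ?thesis using y(2) unfolding Ycat_def by blast
  qed
  have revY: "\<exists>x \<tau>. SA n k0 x \<and> \<tau> \<in> TB \<and> Deq n (rev y) (x @ \<tau>)" if y: "y \<in> YB" for y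
  proof -
    have yY: "\<exists>x \<tau>. SA n k0 x \<and> \<tau> \<in> TB \<and> Deq n y (x @ \<tau>)"
      using step[OF TBw(2) y] by simp
    have w10: "Deq n [0,1] [1,0]" by (rule W1rev) (use n in auto)
    have "Deq n (rev y) y"
      using y w10 unfolding YB_def by (auto simp: Deq.Deq_refl intro: wrev n)
    then show ?thesis using yY by (blast intro: Deq.Deq_trans)
  qed
  have nil: "\<exists>x \<tau>. SA n k0 x \<and> \<tau> \<in> TB \<and> Deq n [] (x @ \<tau>)"
    using SAnil TBw by (intro exI[of _ "[]"] exI[of _ "[]"]) (auto simp: Deq.Deq_refl)
  have cl: "SB (u @ v)" if "SB u" "SB v" for u v
    using coset_closure[of "SA n k0" TB YB n u v] SAcl step gen that unfolding SB_def by blast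
  have rv: "SB (rev u)" if "SB u" for u
    using coset_rev[of "SA n k0" TB YB n u] SAcl step gen revY nil that unfolding SB_def by blast
  show ?thesis using cl rv SB_iff by blast
qed

lemma H_closed: "k < n \<Longrightarrow> (\<forall>u v. inH n k u \<longrightarrow> inH n k v \<longrightarrow> inH n k (u @ v)) \<and> (\<forall>u. inH n k u \<longrightarrow> inH n k (rev u))"
proof (induction k)
  case 0
  have "inH n 0 u \<longleftrightarrow> Deq n u []" for u unfolding inH_def by (simp add: NW_0)
  then show ?case using Deq_app[of n _ "[]" _ "[]"] Deq_rev[of n _ "[]"] by auto
next
  case (Suc k)
  then have IH: "(\<forall>u v. inH n k u \<longrightarrow> inH n k v \<longrightarrow> inH n k (u @ v)) \<and> (\<forall>u. inH n k u \<longrightarrow> inH n k (rev u))" by simp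
  show ?case by (rule stepB) (use Suc.prems IH in auto)
qed


lemma Dclass_eq: "Deq n u v \<Longrightarrow> Dclass n u = Dclass n v"
  unfolding Dclass_def by (blast intro: Deq.Deq_trans Deq.Deq_sym)

lemma Dclass_self: "u \<in> Dclass n u" unfolding Dclass_def by (simp add: Deq.Deq_refl)

lemma Dclass_eq_iff: "Dclass n u = Dclass n v \<longleftrightarrow> Deq n u v"
  using Dclass_eq Dclass_self unfolding Dclass_def by blast

lemma D_mult: "Dclass n u \<otimes>\<^bsub>D_group n\<^esub> Dclass n v = Dclass n (u @ v)"
proof -
  have eq: "Dclass n (a @ b) = Dclass n (u @ v)" if "a \<in> Dclass n u" "b \<in> Dclass n v" for a b
  proof -
    have "Deq n u a" "Deq n v b" using that unfolding Dclass_def by auto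
    then have "Deq n (u @ v) (a @ b)" by (rule Deq_app)
    then show ?thesis by (rule Dclass_eq[symmetric])
  qed
  have "(\<Union>a\<in>Dclass n u. \<Union>b\<in>Dclass n v. Dclass n (a @ b)) = Dclass n (u @ v)"
  proof (intro equalityI subsetI)
    fix x assume "x \<in> (\<Union>a\<in>Dclass n u. \<Union>b\<in>Dclass n v. Dclass n (a @ b))"
    then obtain a b where "a \<in> Dclass n u" "b \<in> Dclass n v" "x \<in> Dclass n (a @ b)" by blast
    then show "x \<in> Dclass n (u @ v)" using eq by blast
  next
    fix x assume "x \<in> Dclass n (u @ v)"
    then show "x \<in> (\<Union>a\<in>Dclass n u. \<Union>b\<in>Dclass n v. Dclass n (a @ b))"
      using Dclass_self[of u n] Dclass_self[of v n] by blast
  qed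
  then show ?thesis unfolding D_group_def by simp
qed

lemma D_one: "\<one>\<^bsub>D_group n\<^esub> = Dclass n []" unfolding D_group_def by simp
lemma D_carrier: "carrier (D_group n) = Dclass n ` lists {..<n}" unfolding D_group_def by simp

lemma D_carrierI: "u \<in> lists {..<n} \<Longrightarrow> Dclass n u \<in> carrier (D_group n)"
  unfolding D_carrier by (rule imageI)

lemma D_group: "group (D_group n)"
proof (rule groupI)
  fix x y assume "x \<in> carrier (D_group n)" "y \<in> carrier (D_group n)"
  then obtain u v where "x = Dclass n u" "u \<in> lists {..<n}" "y = Dclass n v" "v \<in> lists {..<n}"
    by (auto simp: D_carrier)
  then show "x \<otimes>\<^bsub>D_group n\<^esub> y \<in> carrier (D_group n)"
    by (simp add: D_mult D_carrierI)
next
  show "\<one>\<^bsub>D_group n\<^esub> \<in> carrier (D_group n)" unfolding D_one by (rule D_carrierI) simp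
next
  fix x y z assume "x \<in> carrier (D_group n)" "y \<in> carrier (D_group n)" "z \<in> carrier (D_group n)"
  then obtain u v w where "x = Dclass n u" "y = Dclass n v" "z = Dclass n w" by (auto simp: D_carrier)
  then show "x \<otimes>\<^bsub>D_group n\<^esub> y \<otimes>\<^bsub>D_group n\<^esub> z = x \<otimes>\<^bsub>D_group n\<^esub> (y \<otimes>\<^bsub>D_group n\<^esub> z)"
    by (simp add: D_mult)
next
  fix x assume "x \<in> carrier (D_group n)"
  then obtain u where "x = Dclass n u" by (auto simp: D_carrier)
  then show "\<one>\<^bsub>D_group n\<^esub> \<otimes>\<^bsub>D_group n\<^esub> x = x" by (simp add: D_mult D_one)
next
  fix x assume "x \<in> carrier (D_group n)"
  then obtain u where u: "x = Dclass n u" "u \<in> lists {..<n}" by (auto simp: D_carrier)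
  have "Dclass n (rev u) \<otimes>\<^bsub>D_group n\<^esub> x = Dclass n (rev u @ u)" using u(1) by (simp add: D_mult)
  also have "... = Dclass n []" by (rule Dclass_eq, rule cancel') (use u(2) in auto)
  finally have e: "Dclass n (rev u) \<otimes>\<^bsub>D_group n\<^esub> x = \<one>\<^bsub>D_group n\<^esub>" by (simp add: D_one)
  moreover have "Dclass n (rev u) \<in> carrier (D_group n)" using u by (intro D_carrierI) auto
  ultimately show "\<exists>y\<in>carrier (D_group n). y \<otimes>\<^bsub>D_group n\<^esub> x = \<one>\<^bsub>D_group n\<^esub>" by blast
qed

lemma D_inv: assumes "u \<in> lists {..<n}" shows "inv\<^bsub>D_group n\<^esub> (Dclass n u) = Dclass n (rev u)"
proof (rule group.inv_equality[OF D_group])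
  have "Dclass n (rev u) \<otimes>\<^bsub>D_group n\<^esub> Dclass n u = Dclass n (rev u @ u)" by (simp add: D_mult)
  also have "... = Dclass n []" by (rule Dclass_eq, rule cancel') (use assms in auto)
  finally show "Dclass n (rev u) \<otimes>\<^bsub>D_group n\<^esub> Dclass n u = \<one>\<^bsub>D_group n\<^esub>" by (simp add: D_one)
  show "Dclass n u \<in> carrier (D_group n)" by (rule D_carrierI[OF assms])
  show "Dclass n (rev u) \<in> carrier (D_group n)" by (rule D_carrierI) (use assms in auto)
qed

lemma NW_lists: "m < n \<Longrightarrow> x \<in> NW m \<Longrightarrow> x \<in> lists {..<n}"
  using NW_letters[of x m] by auto

lemma H_subgroup: assumes "m < n" shows "subgroup (H_set n m) (D_group n)"
proof (rule group.subgroupI[OF D_group])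
  show "H_set n m \<subseteq> carrier (D_group n)" unfolding H_set_NW D_carrier using NW_lists[OF assms] by auto
  show "H_set n m \<noteq> {}" unfolding H_set_NW using NW_Nil by auto
next
  fix a assume "a \<in> H_set n m"
  then obtain x where x: "a = Dclass n x" "x \<in> NW m" unfolding H_set_NW by auto
  have "inH n m (rev x)" using H_closed[OF assms] inH_NW[OF x(2)] by blast
  then obtain z where z: "z \<in> NW m" "Deq n (rev x) z" unfolding inH_def by blast
  have "inv\<^bsub>D_group n\<^esub> a = Dclass n z" using x z D_inv[OF NW_lists[OF assms x(2)]] Dclass_eq[OF z(2)] by simp
  then show "inv\<^bsub>D_group n\<^esub> a \<in> H_set n m" unfolding H_set_NW using z(1) by simp
next
  fix a b assume "a \<in> H_set n m" "b \<in> H_set n m"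
  then obtain x y where xy: "a = Dclass n x" "x \<in> NW m" "b = Dclass n y" "y \<in> NW m" unfolding H_set_NW by auto
  have "inH n m (x @ y)" using H_closed[OF assms] inH_NW[OF xy(2)] inH_NW[OF xy(4)] by blast
  then obtain z where z: "z \<in> NW m" "Deq n (x @ y) z" unfolding inH_def by blast
  have "a \<otimes>\<^bsub>D_group n\<^esub> b = Dclass n z" using xy D_mult Dclass_eq[OF z(2)] by simp
  then show "a \<otimes>\<^bsub>D_group n\<^esub> b \<in> H_set n m" unfolding H_set_NW using z(1) by simp
qed


definition sg :: "nat \<Rightarrow> int \<Rightarrow> int" where
  "sg g x = (if g = 0 then (if x = 1 then -2 else if x = 2 then -1 else if x = -1 then 2 else if x = -2 then 1 else x)
     else (if x = int g then int g + 1 else if x = int g + 1 then int g else if x = - int g then - int g - 1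
           else if x = - int g - 1 then - int g else x))"

fun phi :: "nat list \<Rightarrow> int \<Rightarrow> int" where
  "phi [] = id"
| "phi (g # u) = sg g \<circ> phi u"

lemma phi_append: "phi (u @ v) = phi u \<circ> phi v"
  by (induction u) auto

lemma sg_invol: "sg g (sg g x) = x" unfolding sg_def by auto
lemma sg_odd: "sg g (- x) = - sg g x" unfolding sg_def by auto

lemma phi_odd: "phi u (- x) = - phi u x"
  by (induction u arbitrary: x) (auto simp: sg_odd)

lemma phi_inj: "inj (phi u)"
proof (induction u)
  case Nil then show ?case by simp
next
  case (Cons g u)
  have "inj (sg g)" by (metis injI sg_invol)
  then show ?case using Cons inj_compose[of "sg g" "phi u"] by (simp add: comp_def)
qed

lemma phi_gg: "phi [g, g] = id" by (auto simp: sg_invol fun_eq_iff)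

lemma sg_pos: "1 \<le> g \<Longrightarrow> sg g x = (if x = int g then x+1 else if x = int g + 1 then x - 1 else if x = - int g then x - 1 else if x = - int g - 1 then x + 1 else x)"
  unfolding sg_def by auto
lemma sg_zero: "sg 0 x = (if x = 1 then -2 else if x = 2 then -1 else if x = -1 then 2 else if x = -2 then 1 else x)"
  unfolding sg_def by auto

lemma braid_pt: assumes "1 \<le> i"
  shows "sg i (sg (i+1) (sg i (sg (i+1) (sg i (sg (i+1) x))))) = x"
proof -
  consider "x = int i" | "x = int i + 1" | "x = int i + 2" | "x = - int i" | "x = - int i - 1" | "x = - int i - 2"
    | "x \<noteq> int i \<and> x \<noteq> int i + 1 \<and> x \<noteq> int i + 2 \<and> x \<noteq> - int i \<and> x \<noteq> - int i - 1 \<and> x \<noteq> - int i - 2" by blast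
  then show ?thesis by cases (use assms in \<open>simp_all add: sg_pos\<close>)
qed

lemma comm_pt: assumes "1 \<le> i" "1 \<le> j" "i + 2 \<le> j \<or> j + 2 \<le> i"
  shows "sg i (sg j (sg i (sg j x))) = x"
proof -
  consider "x = int i" | "x = int i + 1" | "x = int j" | "x = int j + 1" | "x = - int i" | "x = - int i - 1" | "x = - int j" | "x = - int j - 1"
    | "x \<noteq> int i \<and> x \<noteq> int i + 1 \<and> x \<noteq> int j \<and> x \<noteq> int j + 1 \<and> x \<noteq> - int i \<and> x \<noteq> - int i - 1 \<and> x \<noteq> - int j \<and> x \<noteq> - int j - 1" by blast
  then show ?thesis by cases (use assms in \<open>auto simp: sg_pos\<close>)
qed

lemma zero2_pt: "sg 0 (sg 2 (sg 0 (sg 2 (sg 0 (sg 2 x))))) = x"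
proof -
  consider "x = 1" | "x = 2" | "x = 3" | "x = -1" | "x = -2" | "x = -3"
    | "x \<noteq> 1 \<and> x \<noteq> 2 \<and> x \<noteq> 3 \<and> x \<noteq> -1 \<and> x \<noteq> -2 \<and> x \<noteq> -3" by blast
  then show ?thesis by cases (simp_all add: sg_pos sg_zero)
qed

lemma zeroi_pt: assumes "1 \<le> i" "i \<noteq> 2"
  shows "sg 0 (sg i (sg 0 (sg i x))) = x"
proof -
  consider "x = 1" | "x = 2" | "x = -1" | "x = -2" | "x = int i" | "x = int i + 1" | "x = - int i" | "x = - int i - 1"
    | "x \<noteq> 1 \<and> x \<noteq> 2 \<and> x \<noteq> -1 \<and> x \<noteq> -2 \<and> x \<noteq> int i \<and> x \<noteq> int i + 1 \<and> x \<noteq> - int i \<and> x \<noteq> - int i - 1" by blast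
  then show ?thesis by cases (use assms in \<open>simp_all add: sg_pos sg_zero\<close>)
qed

lemma phi_rel: assumes "r \<in> D_relators n" shows "phi r = id"
proof -
  consider (a) g where "r = [g, g]"
    | (b) i where "r = concat (replicate 3 [i, i + 1])" "1 \<le> i"
    | (c) i j where "r = concat (replicate 2 [i, j])" "1 \<le> i" "1 \<le> j" "i + 2 \<le> j \<or> j + 2 \<le> i"
    | (d) "r = concat (replicate 3 [0, 2])"
    | (e) i where "r = concat (replicate 2 [0, i])" "1 \<le> i" "i \<noteq> 2"
    using assms unfolding D_relators_def by (auto split: if_splits)
  then show ?thesis
  proof cases
    case a then show ?thesis by (auto simp: sg_invol fun_eq_iff)
  next
    case b then show ?thesis using braid_pt[of i] by (auto simp: numeral_3_eq_3)
  next
    case c then show ?thesis using comm_pt[of i j] by (auto simp: numeral_2_eq_2)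
  next
    case d then show ?thesis using zero2_pt by (auto simp: numeral_3_eq_3)
  next
    case e then show ?thesis using zeroi_pt[of i] by (auto simp: numeral_2_eq_2)
  qed
qed

lemma phi_Deq: "Deq n u v \<Longrightarrow> phi u = phi v"
proof (induction rule: Deq.induct)
  case (Deq_rel r a b)
  then show ?case using phi_rel[OF Deq_rel] by (simp add: phi_append)
qed auto


lemma phi_snoc: "phi (u @ [g]) = phi u \<circ> sg g" by (simp add: phi_append)

lemma phi_fix: "(\<forall>g\<in>set u. (g = 0 \<longrightarrow> 2 < \<bar>z\<bar>) \<and> (1 \<le> g \<longrightarrow> int g + 1 < \<bar>z\<bar>)) \<Longrightarrow> phi u z = z"
proof (induction u)
  case Nil then show ?case by simp
next
  case (Cons g u)
  then have "phi u z = z" by simp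
  moreover have "sg g z = z" using Cons.prems unfolding sg_def by auto
  ultimately show ?case by simp
qed

lemma phi_parity: assumes "2 \<le> n" "set u \<subseteq> {..<n}" shows "(\<Prod>z\<in>{1..int n}. sgn (phi u z)) = 1"
  using assms(2)
proof (induction u rule: rev_induct)
  case Nil then show ?case by (intro prod.neutral) auto
next
  case (snoc g u)
  have IH: "(\<Prod>z\<in>{1..int n}. sgn (phi u z)) = 1" using snoc by auto
  have gn: "g < n" using snoc.prems by auto
  show ?case
  proof (cases "g = 0")
    case False
    have bij: "bij_betw (sg g) {1..int n} {1..int n}"
      by (rule bij_betwI[of _ _ _ "sg g"]) (use False gn in \<open>auto simp: sg_def sg_invol\<close>)
    have "(\<Prod>z\<in>{1..int n}. sgn (phi (u @ [g]) z)) = (\<Prod>z\<in>{1..int n}. sgn (phi u (sg g z)))"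
      by (simp add: phi_snoc)
    also have "... = (\<Prod>z\<in>{1..int n}. sgn (phi u z))"
      using prod.reindex_bij_betw[OF bij, of "\<lambda>z. sgn (phi u z)"] by simp
    finally show ?thesis using IH by simp
  next
    case True
    have S: "{1..int n} = insert 1 (insert 2 {3..int n})" using assms(1) by auto
    have r: "(\<Prod>z\<in>{3..int n}. sgn (phi u (sg 0 z))) = (\<Prod>z\<in>{3..int n}. sgn (phi u z))"
      by (rule prod.cong) (auto simp: sg_def)
    have "(\<Prod>z\<in>{1..int n}. sgn (phi (u @ [g]) z)) = sgn (phi u (sg 0 1)) * (sgn (phi u (sg 0 2)) * (\<Prod>z\<in>{3..int n}. sgn (phi u (sg 0 z))))"
      unfolding S using True by (simp add: phi_snoc)
    also have "... = sgn (phi u 1) * (sgn (phi u 2) * (\<Prod>z\<in>{3..int n}. sgn (phi u z)))"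
      unfolding r by (simp add: sg_def phi_odd sgn_minus)
    also have "... = (\<Prod>z\<in>{1..int n}. sgn (phi u z))" unfolding S by simp
    finally show ?thesis using IH by simp
  qed
qed

lemma phi_t: "1 \<le> K \<Longrightarrow> 1 \<le> z \<Longrightarrow> z \<le> int K \<Longrightarrow> phi [1..<K] z = (if z < int K then z + 1 else 1)"
proof (induction K arbitrary: z rule: nat_induct_at_least)
  case base then show ?case by simp
next
  case (Suc K)
  have e: "[1..<Suc K] = [1..<K] @ [K]" using Suc.hyps by simp
  have fixK: "phi [1..<K] (int K + 1) = int K + 1" by (rule phi_fix) auto
  show ?case
  proof (cases "z < int K")
    case True
    then have "sg K z = z" unfolding sg_def using Suc.hyps Suc.prems by auto
    then show ?thesis using Suc.IH[of z] Suc.prems True e by (simp add: phi_snoc)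
  next
    case False
    then consider "z = int K" | "z = int K + 1" using Suc.prems by linarith
    then show ?thesis
    proof cases
      case 1
      then have "sg K z = int K + 1" unfolding sg_def using Suc.hyps by auto
      then show ?thesis using fixK 1 e by (simp add: phi_snoc)
    next
      case 2
      then have "sg K z = int K" unfolding sg_def using Suc.hyps by auto
      then show ?thesis using Suc.IH[of "int K"] 2 e Suc.hyps by (simp add: phi_snoc)
    qed
  qed
qed

lemma phi_tpow: "1 \<le> z \<Longrightarrow> z \<le> int K \<Longrightarrow> a < K \<Longrightarrow>
  phi (word_pow [1..<K] a) z = (if z + int a \<le> int K then z + int a else z + int a - int K)"
proof (induction a)
  case 0 then show ?case by simp
next
  case (Suc a)
  have K1: "1 \<le> K" using Suc.prems by simp
  let ?v = "if z + int a \<le> int K then z + int a else z + int a - int K"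
  have v: "phi (word_pow [1..<K] a) z = ?v" using Suc by simp
  have vr: "1 \<le> ?v" "?v \<le> int K" using Suc.prems by auto
  have "phi (word_pow [1..<K] (Suc a)) z = phi [1..<K] (phi (word_pow [1..<K] a) z)" by (simp add: word_pow_Suc phi_append)
  also have "... = phi [1..<K] ?v" by (simp only: v)
  also have "... = (if ?v < int K then ?v + 1 else 1)" by (rule phi_t[OF K1 vr])
  also have "... = (if z + int (Suc a) \<le> int K then z + int (Suc a) else z + int (Suc a) - int K)"
    using Suc.prems by auto
  finally show ?case .
qed

lemma phi_w: "1 \<le> j \<Longrightarrow> phi (w_word j) x = (if x = 1 \<or> x = -1 \<or> x = int j + 1 \<or> x = - int j - 1 then - x else x)"
proof (induction j arbitrary: x rule: nat_induct_at_least)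
  case base
  have "phi (w_word 1) x = sg 1 (sg 0 x)" by (simp add: w_1)
  then show ?case unfolding sg_def by auto
next
  case (Suc j)
  have "phi (w_word (Suc j)) x = sg (Suc j) (phi (w_word j) (sg (Suc j) x))"
    using w_Suc[OF Suc.hyps] by (simp add: phi_append)
  then show ?case using Suc.IH Suc.hyps unfolding sg_def by auto
qed



lemma phi_surj: "surj (phi u)"
proof (induction u)
  case Nil then show ?case by simp
next
  case (Cons g u)
  have "surj (sg g)" by (metis surjI sg_invol)
  then show ?case using Cons comp_surj[of "phi u" "sg g"] by simp
qed

lemma comp_cancel_surj: "f \<circ> h = g \<circ> h \<Longrightarrow> surj h \<Longrightarrow> f = g"
  by (metis surj_fun_eq)

lemma NW_0_Nil: "x \<in> NW 0 \<Longrightarrow> x = []" by (simp add: NW_0)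

lemma phi_NW_fix: assumes "x \<in> NW k" "int k + 1 < \<bar>z\<bar>" shows "phi x z = z"
proof (rule phi_fix, intro ballI conjI impI)
  fix g assume g: "g \<in> set x"
  have gk: "g \<le> k" using NW_letters[OF assms(1)] g by auto
  have k1: "1 \<le> k" using g assms(1) by (cases k) (auto simp: NW_0)
  show "g = 0 \<Longrightarrow> 2 < \<bar>z\<bar>" using k1 assms(2) by linarith
  show "1 \<le> g \<Longrightarrow> int g + 1 < \<bar>z\<bar>" using gk assms(2) by linarith
qed

definition pres :: "int set \<Rightarrow> (int \<Rightarrow> int) \<Rightarrow> bool" where "pres S f \<longleftrightarrow> (\<forall>z\<in>S. f z \<in> S)"

lemma pres_comp: "pres S f \<Longrightarrow> pres S g \<Longrightarrow> pres S (f \<circ> g)" unfolding pres_def by auto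
lemma pres_id: "pres S id" unfolding pres_def by auto
lemma pres_id'[simp]: "pres S (\<lambda>a. a)" unfolding pres_def by auto

lemma pres_phi_pow: "pres S (phi u) \<Longrightarrow> pres S (phi (word_pow u a))"
  by (induction a) (auto simp: word_pow_Suc phi_append pres_comp pres_id)

lemma pres_letters: "(\<forall>g\<in>set u. 1 \<le> g \<and> g + 1 \<le> k) \<Longrightarrow> pres (signed_set k) (phi u)"
proof (induction u)
  case Nil then show ?case by (simp add: pres_id)
next
  case (Cons g u)
  have "pres (signed_set k) (sg g)" using Cons.prems unfolding pres_def signed_set_def sg_def by auto
  then show ?case using Cons unfolding pres_def by auto
qed

lemma pres_t: "j \<le> k \<Longrightarrow> pres (signed_set k) (phi (t_word j))"
  by (rule pres_letters) (auto simp: t_word_def)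

lemma pres_w: "1 \<le> j \<Longrightarrow> j \<le> k \<Longrightarrow> pres (signed_set k) (phi (w_word j))"
  unfolding pres_def signed_set_def by (auto simp: phi_w)

lemma pres_NW: "x \<in> NW k \<Longrightarrow> l \<ge> k \<Longrightarrow> pres (signed_set l) (phi x)"
proof (induction k arbitrary: x)
  case 0 then show ?case by (simp add: NW_0 pres_id)
next
  case (Suc k)
  then obtain y a b where x: "x = y @ word_pow (t_word (Suc k)) a @ word_pow (w_word (Suc k)) b" "y \<in> NW k"
    unfolding NW_Suc by blast
  have "pres (signed_set l) (phi y)" using Suc x by simp
  moreover have "pres (signed_set l) (phi (word_pow (t_word (Suc k)) a))" using Suc.prems by (intro pres_phi_pow pres_t) simp
  moreover have "pres (signed_set l) (phi (word_pow (w_word (Suc k)) b))" using Suc.prems by (intro pres_phi_pow pres_w) simp_all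
  ultimately show ?case using x(1) unfolding pres_def by (simp add: phi_append)
qed

lemma finite_signed_set: "finite (signed_set k)" unfolding signed_set_def by simp

lemma pres_bij: assumes "pres S (phi u)" "finite S" shows "phi u ` S = S"
  using assms endo_inj_surj[of S "phi u"] phi_inj[of u] unfolding pres_def
  by (auto intro: inj_on_subset)

lemma phi_zero: "phi u 0 = 0" using phi_odd[of u 0] by simp

lemma phi_NW_edge: assumes "x \<in> NW k" shows "phi x (int k + 1) = int k + 1 \<or> phi x (int k + 1) = - (int k + 1)"
proof -
  let ?w = "phi x (int k + 1)"
  have img: "phi x ` signed_set k = signed_set k" by (rule pres_bij[OF pres_NW[OF assms order_refl] finite_signed_set])
  have nin: "int k + 1 \<notin> signed_set k" unfolding signed_set_def by auto
  have "?w \<notin> signed_set k"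
  proof
    assume "?w \<in> signed_set k"
    then obtain s where "s \<in> signed_set k" "phi x s = ?w" using img by (metis imageE)
    then have "s = int k + 1" using phi_inj[of x] by (meson injD)
    then show False using nin \<open>s \<in> signed_set k\<close> by simp
  qed
  moreover have "\<not> int k + 1 < \<bar>?w\<bar>"
  proof
    assume "int k + 1 < \<bar>?w\<bar>"
    then have "phi x ?w = ?w" by (rule phi_NW_fix[OF assms])
    then have "?w = int k + 1" using phi_inj[of x] by (meson injD)
    then show False using \<open>int k + 1 < \<bar>?w\<bar>\<close> by simp
  qed
  moreover have "?w \<noteq> 0" using phi_inj[of x] phi_zero[of x] by (metis injD of_nat_less_0_iff add_pos_pos zero_less_one less_irrefl of_nat_0_le_iff add_nonneg_pos)
  ultimately show ?thesis unfolding signed_set_def by auto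
qed

lemma phi_NW_edge_inv: assumes "x \<in> NW k" "phi x z = int k + 1 \<or> phi x z = - (int k + 1)"
  shows "z = int k + 1 \<or> z = - (int k + 1)"
proof -
  have o: "phi x (- (int k + 1)) = - phi x (int k + 1)" by (rule phi_odd)
  show ?thesis using phi_NW_edge[OF assms(1)] assms(2) o phi_inj[of x] by (metis injD minus_minus)
qed


lemma phi_wpow_edge: "b \<le> 1 \<Longrightarrow> phi (word_pow (w_word (Suc k)) b) (int k + 2) = (if b = 1 then - (int k + 2) else int k + 2)"
  by (cases b) (auto simp: phi_w)

lemma phi_tpow_fix: "int k + 1 < \<bar>z\<bar> \<Longrightarrow> phi (word_pow (t_word (Suc k)) a) z = z"
proof (rule phi_fix, intro ballI conjI impI)
  fix g assume "int k + 1 < \<bar>z\<bar>" "g \<in> set (word_pow (t_word (Suc k)) a)"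
  then have "g \<in> set (t_word (Suc k))" using set_word_pow by fastforce
  then have "1 \<le> g" "g \<le> k" by (auto simp: t_word_def)
  then show "g = 0 \<Longrightarrow> 2 < \<bar>z\<bar>" "1 \<le> g \<Longrightarrow> int g + 1 < \<bar>z\<bar>" using \<open>int k + 1 < \<bar>z\<bar>\<close> by auto
qed

lemma StepInj:
  assumes x: "x \<in> NW k" and y: "y \<in> NW k" and a: "a \<le> k" "a' \<le> k" and b: "b \<le> 1" "b' \<le> 1"
    and eq: "phi (x @ word_pow (t_word (Suc k)) a @ word_pow (w_word (Suc k)) b) = phi (y @ word_pow (t_word (Suc k)) a' @ word_pow (w_word (Suc k)) b')"
  shows "a = a' \<and> b = b' \<and> phi x = phi y"
proof -
  let ?c = "t_word (Suc k)" and ?w = "w_word (Suc k)"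
  let ?z = "int k + 2"
  have val: "phi (u @ word_pow ?c e @ word_pow ?w f) ?z = (if f = 1 then - ?z else ?z)" if "u \<in> NW k" "f \<le> 1" for u e f
  proof -
    have "phi (u @ word_pow ?c e @ word_pow ?w f) ?z = phi u (phi (word_pow ?c e) (phi (word_pow ?w f) ?z))"
      by (simp add: phi_append)
    also have "phi (word_pow ?w f) ?z = (if f = 1 then - ?z else ?z)" by (rule phi_wpow_edge[OF that(2)])
    finally show ?thesis using phi_tpow_fix[of k "?z" e] phi_tpow_fix[of k "- ?z" e]
        phi_NW_fix[OF that(1), of ?z] phi_NW_fix[OF that(1), of "- ?z"] by auto
  qed
  have bb: "b = b'" using val[OF x b(1), of a] val[OF y b(2), of a'] eq b by (auto split: if_splits)
  have eq2: "phi x \<circ> phi (word_pow ?c a) = phi y \<circ> phi (word_pow ?c a')"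
  proof (rule comp_cancel_surj[OF _ phi_surj[of "word_pow ?w b"]])
    show "phi x \<circ> phi (word_pow ?c a) \<circ> phi (word_pow ?w b) = phi y \<circ> phi (word_pow ?c a') \<circ> phi (word_pow ?w b)"
      using eq bb by (simp add: phi_append comp_assoc)
  qed
  let ?K = "int k + 1"
  let ?s = "?K - int a"
  have c: "?c = [1..<Suc k]" by (simp add: t_word_def)
  have s1: "phi (word_pow ?c a) ?s = ?K"
    unfolding c by (subst phi_tpow) (use a in auto)
  have "phi y (phi (word_pow ?c a') ?s) = phi x ?K" using fun_cong[OF eq2, of ?s] s1 by simp
  then have "phi y (phi (word_pow ?c a') ?s) = ?K \<or> phi y (phi (word_pow ?c a') ?s) = - ?K"
    using phi_NW_edge[OF x] by simp
  then have e: "phi (word_pow ?c a') ?s = ?K \<or> phi (word_pow ?c a') ?s = - ?K" by (rule phi_NW_edge_inv[OF y])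
  have "phi (word_pow ?c a') ?s = (if ?s + int a' \<le> int (Suc k) then ?s + int a' else ?s + int a' - int (Suc k))"
    unfolding c by (rule phi_tpow) (use a in auto)
  then have aa: "a = a'" using e a by (auto split: if_splits)
  have "phi x = phi y"
    by (rule comp_cancel_surj[OF _ phi_surj[of "word_pow ?c a"]]) (use eq2 aa in simp)
  then show ?thesis using aa bb by simp
qed

lemma inj_NW: "x \<in> NW k \<Longrightarrow> y \<in> NW k \<Longrightarrow> phi x = phi y \<Longrightarrow> x = y"
proof (induction k arbitrary: x y)
  case 0 then show ?case by (simp add: NW_0)
next
  case (Suc k)
  obtain x' a b where x: "x = x' @ word_pow (t_word (Suc k)) a @ word_pow (w_word (Suc k)) b" "x' \<in> NW k" "a \<le> k" "b \<le> 1"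
    using Suc.prems(1) unfolding NW_Suc by blast
  obtain y' a' b' where y: "y = y' @ word_pow (t_word (Suc k)) a' @ word_pow (w_word (Suc k)) b'" "y' \<in> NW k" "a' \<le> k" "b' \<le> 1"
    using Suc.prems(2) unfolding NW_Suc by blast
  have "a = a' \<and> b = b' \<and> phi x' = phi y'"
    by (rule StepInj[OF x(2) y(2) x(3) y(3) x(4) y(4)]) (use Suc.prems x y in simp)
  then show ?case using Suc.IH[OF x(2) y(2)] x y by simp
qed

lemma NW_Suc_image: "NW (Suc k) = (\<lambda>(x, a, b). x @ word_pow (t_word (Suc k)) a @ word_pow (w_word (Suc k)) b) ` (NW k \<times> {..k} \<times> {..1})"
  (is "_ = ?f ` _")
proof (intro equalityI subsetI)
  fix u assume "u \<in> NW (Suc k)"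
  then obtain x a b where h: "u = x @ word_pow (t_word (Suc k)) a @ word_pow (w_word (Suc k)) b" "x \<in> NW k" "a \<le> k" "b \<le> 1"
    unfolding NW_Suc by blast
  show "u \<in> ?f ` (NW k \<times> {..k} \<times> {..1})" by (rule image_eqI[of u ?f "(x, a, b)"]) (use h in auto)
next
  fix u assume "u \<in> ?f ` (NW k \<times> {..k} \<times> {..1})"
  then show "u \<in> NW (Suc k)" unfolding NW_Suc by auto
qed

lemma finite_NW: "finite (NW k)"
proof (induction k)
  case 0 then show ?case by (simp add: NW_0)
next
  case (Suc k)
  have "NW (Suc k) = (\<lambda>(x, a, b). x @ word_pow (t_word (Suc k)) a @ word_pow (w_word (Suc k)) b) ` (NW k \<times> {..k} \<times> {..1})"
    by (rule NW_Suc_image)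
  then show ?case using Suc by simp
qed

lemma card_NW: "card (NW k) = 2 ^ k * fact k"
proof (induction k)
  case 0 then show ?case by (simp add: NW_0)
next
  case (Suc k)
  let ?f = "\<lambda>(x, a, b). x @ word_pow (t_word (Suc k)) a @ word_pow (w_word (Suc k)) b"
  have im: "NW (Suc k) = ?f ` (NW k \<times> {..k} \<times> {..1})" by (rule NW_Suc_image)
  have inj: "inj_on ?f (NW k \<times> {..k} \<times> {..1})"
  proof (rule inj_onI)
    fix p q assume p: "p \<in> NW k \<times> {..k} \<times> {..1}" and q: "q \<in> NW k \<times> {..k} \<times> {..1}" and e0: "?f p = ?f q"
    obtain x a b where pp: "p = (x, a, b)" by (cases p) auto
    obtain y a' b' where qq: "q = (y, a', b')" by (cases q) auto
    have h: "x \<in> NW k" "a \<le> k" "b \<le> 1" "y \<in> NW k" "a' \<le> k" "b' \<le> 1" using p q pp qq by auto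
    have e: "x @ word_pow (t_word (Suc k)) a @ word_pow (w_word (Suc k)) b = y @ word_pow (t_word (Suc k)) a' @ word_pow (w_word (Suc k)) b'"
      using e0 pp qq by simp
    have "a = a' \<and> b = b' \<and> phi x = phi y" by (rule StepInj[OF h(1) h(4) h(2) h(5) h(3) h(6)]) (use e in simp)
    then show "p = q" using inj_NW[OF h(1) h(4)] pp qq by simp
  qed
  have "card (NW (Suc k)) = card (NW k \<times> {..k} \<times> {..1::nat})" unfolding im using card_image[OF inj] by simp
  also have "... = card (NW k) * (Suc k * 2)" by (simp add: card_cartesian_product)
  finally show ?case using Suc by (simp add: algebra_simps)
qed


lemma B_carrier_card: "finite (carrier (B_group m)) \<and> card (carrier (B_group m)) \<le> 2 ^ m * fact m"
proof -
  let ?S = "signed_set m" and ?P = "{1..int m}"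
  let ?C = "carrier (B_group m)"
  define F where "F = (\<lambda>\<sigma>::int \<Rightarrow> int. ((\<lambda>z. if z \<in> ?P then \<bar>\<sigma> z\<bar> else z), restrict (\<lambda>z. sgn (\<sigma> z)) ?P))"
  let ?T = "{p. p permutes ?P} \<times> (?P \<rightarrow>\<^sub>E {-1, 1::int})"
  have PS: "?P \<subseteq> ?S" unfolding signed_set_def by auto
  have memS: "z \<in> ?S \<longleftrightarrow> z \<noteq> 0 \<and> \<bar>z\<bar> \<le> int m" for z unfolding signed_set_def by auto
  have into: "F \<sigma> \<in> ?T" if s: "\<sigma> \<in> ?C" for \<sigma>
  proof -
    have bij: "bij_betw \<sigma> ?S ?S" and odd: "\<forall>x\<in>?S. \<sigma> (- x) = - \<sigma> x" using s unfolding B_group_def by auto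
    have inS: "\<sigma> z \<in> ?S" if "z \<in> ?S" for z using bij that bij_betwE by blast
    have inj: "inj_on \<sigma> ?S" using bij bij_betw_def by blast
    let ?p = "\<lambda>z. if z \<in> ?P then \<bar>\<sigma> z\<bar> else z"
    have pinto: "?p ` ?P \<subseteq> ?P"
    proof
      fix y assume "y \<in> ?p ` ?P"
      then obtain x where x: "x \<in> ?P" "y = \<bar>\<sigma> x\<bar>" by auto
      have "\<sigma> x \<in> ?S" using inS PS x(1) by auto
      then have "\<sigma> x \<noteq> 0" "\<bar>\<sigma> x\<bar> \<le> int m" by (auto simp: memS)
      then show "y \<in> ?P" using x(2) by auto
    qed
    have pinj: "inj_on ?p ?P"
    proof (rule inj_onI)
      fix x y assume xy: "x \<in> ?P" "y \<in> ?P" "?p x = ?p y"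
      then have "\<bar>\<sigma> x\<bar> = \<bar>\<sigma> y\<bar>" by simp
      then have "\<sigma> x = \<sigma> y \<or> \<sigma> x = - \<sigma> y" by (auto simp: abs_eq_iff)
      moreover have "-y \<in> ?S" using xy PS by (auto simp: memS)
      ultimately have "x = y \<or> x = - y" using odd inj xy PS by (metis inj_on_eq_iff subsetD)
      then show "x = y" using xy by auto
    qed
    have "bij_betw ?p ?P ?P" using endo_inj_surj[OF _ pinto pinj] pinj by (simp add: bij_betw_def)
    then have "?p permutes ?P" by (rule bij_imp_permutes) auto
    moreover have "restrict (\<lambda>z. sgn (\<sigma> z)) ?P \<in> ?P \<rightarrow>\<^sub>E {-1, 1}"
      using inS PS by (auto simp: memS sgn_if)
    ultimately show ?thesis unfolding F_def by simp
  qed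
  have finj: "inj_on F ?C"
  proof (rule inj_onI)
    fix \<sigma> \<tau> assume s: "\<sigma> \<in> ?C" and t: "\<tau> \<in> ?C" and e: "F \<sigma> = F \<tau>"
    have oddS: "\<forall>x\<in>?S. \<sigma> (- x) = - \<sigma> x" "\<forall>x. x \<notin> ?S \<longrightarrow> \<sigma> x = x" using s unfolding B_group_def by auto
    have oddT: "\<forall>x\<in>?S. \<tau> (- x) = - \<tau> x" "\<forall>x. x \<notin> ?S \<longrightarrow> \<tau> x = x" using t unfolding B_group_def by auto
    have onP: "\<sigma> z = \<tau> z" if z: "z \<in> ?P" for z
    proof -
      have "\<bar>\<sigma> z\<bar> = \<bar>\<tau> z\<bar>" using fun_cong[OF arg_cong[OF e, of fst], of z] z unfolding F_def by simp
      moreover have "sgn (\<sigma> z) = sgn (\<tau> z)"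
        using fun_cong[OF arg_cong[OF e, of snd], of z] z unfolding F_def by simp
      ultimately show ?thesis by (metis sgn_mult_abs)
    qed
    show "\<sigma> = \<tau>"
    proof
      fix z
      consider "z \<in> ?P" | "- z \<in> ?P" | "z \<notin> ?S" unfolding memS by (cases "z = 0 \<or> \<not> \<bar>z\<bar> \<le> int m") (auto, linarith)
      then show "\<sigma> z = \<tau> z"
      proof cases
        case 1 then show ?thesis by (rule onP)
      next
        case 2
        have "-z \<in> ?S" using 2 PS by auto
        then have "\<sigma> z = - \<sigma> (-z)" "\<tau> z = - \<tau> (-z)" using oddS(1) oddT(1) by (metis minus_minus)+
        then show ?thesis using onP[OF 2] by simp
      next
        case 3 then show ?thesis using oddS(2) oddT(2) by simp
      qed
    qed
  qed
  have finT: "finite ?T" by (intro finite_cartesian_product finite_permutations finite_PiE) auto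
  have cardT: "card ?T = fact m * 2 ^ m"
  proof -
    have "card {p. p permutes ?P} = fact m" by (rule card_permutations) auto
    moreover have "card (?P \<rightarrow>\<^sub>E {-1, 1::int}) = 2 ^ m" by (simp add: card_PiE numeral_2_eq_2)
    ultimately show ?thesis by (simp add: card_cartesian_product)
  qed
  have sub: "F ` ?C \<subseteq> ?T" using into by (simp add: image_subset_iff)
  have finC: "finite ?C" using finite_imageD[OF finite_subset[OF sub finT] finj] .
  have "card ?C \<le> card ?T" using card_inj_on_le[OF finj sub finT] .
  then show ?thesis using finC cardT by (simp add: mult.commute)
qed


definition rho :: "nat \<Rightarrow> (int \<Rightarrow> int) \<Rightarrow> int \<Rightarrow> int" where
  "rho m \<sigma> = (\<lambda>z. if z \<in> signed_set m then \<sigma> z else z)"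

definition psi :: "nat \<Rightarrow> nat list set \<Rightarrow> int \<Rightarrow> int" where
  "psi m A = rho m (phi (SOME u. u \<in> A))"

lemma psi_cls: "psi m (Dclass n x) = rho m (phi x)"
proof -
  have "(SOME u. u \<in> Dclass n x) \<in> Dclass n x" by (rule someI, rule Dclass_self)
  then have "Deq n x (SOME u. u \<in> Dclass n x)" unfolding Dclass_def by simp
  then show ?thesis unfolding psi_def using phi_Deq by metis
qed

lemma rho_carrier: assumes "x \<in> NW m" shows "rho m (phi x) \<in> carrier (B_group m)"
proof -
  let ?S = "signed_set m"
  have img: "phi x ` ?S = ?S" by (rule pres_bij[OF pres_NW[OF assms order_refl] finite_signed_set])
  have "bij_betw (phi x) ?S ?S" unfolding bij_betw_def using img phi_inj[of x] by (auto intro: inj_on_subset)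
  then have "bij_betw (rho m (phi x)) ?S ?S" by (rule bij_betw_cong[THEN iffD1, rotated]) (simp add: rho_def)
  moreover have "\<forall>z\<in>?S. rho m (phi x) (- z) = - rho m (phi x) z"
    unfolding rho_def signed_set_def by (auto simp: phi_odd)
  moreover have "\<forall>z. z \<notin> ?S \<longrightarrow> rho m (phi x) z = z" unfolding rho_def by simp
  ultimately show ?thesis unfolding B_group_def by simp
qed

lemma rho_comp: assumes "pres (signed_set m) g" shows "rho m (f \<circ> g) = rho m f \<circ> rho m g"
  using assms unfolding rho_def pres_def by (auto simp: fun_eq_iff)

lemma rho_inj: assumes x: "x \<in> NW m" and y: "y \<in> NW m" and m: "1 \<le> m" "m < n"
  and e: "rho m (phi x) = rho m (phi y)"
  shows "phi x = phi y"
proof -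
  let ?S = "signed_set m" and ?e = "int m + 1"
  have onS: "phi x z = phi y z" if "z \<in> ?S" for z using fun_cong[OF e, of z] that unfolding rho_def by simp
  have lx: "set x \<subseteq> {..<n}" "set y \<subseteq> {..<n}" using NW_letters[OF x] NW_letters[OF y] m by auto
  have n2: "2 \<le> n" using m by simp
  have fin: "finite {1..int n}" by simp
  have mem: "?e \<in> {1..int n}" using m by auto
  have Q: "(\<Prod>w\<in>{1..int n} - {?e}. sgn (phi x w)) = (\<Prod>w\<in>{1..int n} - {?e}. sgn (phi y w))"
  proof (rule prod.cong[OF refl])
    fix w assume w: "w \<in> {1..int n} - {?e}"
    show "sgn (phi x w) = sgn (phi y w)"
    proof (cases "w \<in> ?S")
      case True then show ?thesis using onS by simp
    next
      case False
      then have "?e < \<bar>w\<bar>" using w unfolding signed_set_def by auto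
      then show ?thesis using phi_NW_fix[OF x] phi_NW_fix[OF y] by simp
    qed
  qed
  have px: "sgn (phi x ?e) * (\<Prod>w\<in>{1..int n} - {?e}. sgn (phi x w)) = 1"
    using phi_parity[OF n2 lx(1)] prod.remove[OF fin mem, of "\<lambda>w. sgn (phi x w)"] by simp
  have py: "sgn (phi y ?e) * (\<Prod>w\<in>{1..int n} - {?e}. sgn (phi x w)) = 1"
    using phi_parity[OF n2 lx(2)] prod.remove[OF fin mem, of "\<lambda>w. sgn (phi y w)"] Q by simp
  have "sgn (phi x ?e) = sgn (phi y ?e)"
  proof -
    let ?q = "\<Prod>w\<in>{1..int n} - {?e}. sgn (phi x w)"
    have "?q \<noteq> 0"
    proof
      assume "?q = 0"
      then show False using px by (simp only: mult_zero_right)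
    qed
    then show ?thesis using px py by (metis mult_right_cancel)
  qed
  moreover have "phi x ?e = ?e \<or> phi x ?e = - ?e" by (rule phi_NW_edge[OF x])
  moreover have "phi y ?e = ?e \<or> phi y ?e = - ?e" by (rule phi_NW_edge[OF y])
  ultimately have edge: "phi x ?e = phi y ?e" by (auto simp: sgn_if split: if_splits)
  show ?thesis
  proof
    fix z
    consider "z \<in> ?S" | "z = ?e" | "z = - ?e" | "?e < \<bar>z\<bar>" | "z = 0" unfolding signed_set_def by force
    then show "phi x z = phi y z"
    proof cases
      case 1 then show ?thesis by (rule onS)
    next
      case 2 then show ?thesis using edge by simp
    next
      case 3 then show ?thesis using edge phi_odd[of x ?e] phi_odd[of y ?e] by simp
    next
      case 4 then show ?thesis using phi_NW_fix[OF x] phi_NW_fix[OF y] by simp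
    next
      case 5 then show ?thesis by (simp add: phi_zero)
    qed
  qed
qed

theorem mainTheorem3:
  fixes n m :: nat
  assumes "0 < m" and "m < n"
  shows "subgroup (H_set n m) (D_group n)
         \<and> (D_group n)\<lparr>carrier := H_set n m\<rparr> \<cong> B_group m"
proof
  show "subgroup (H_set n m) (D_group n)" by (rule H_subgroup[OF assms(2)])
  let ?G = "(D_group n)\<lparr>carrier := H_set n m\<rparr>"
  have m1: "1 \<le> m" using assms by simp
  have Dinj: "inj_on (Dclass n) (NW m)"
  proof (rule inj_onI)
    fix x y assume "x \<in> NW m" "y \<in> NW m" "Dclass n x = Dclass n y"
    then show "x = y" using inj_NW Dclass_eq_iff phi_Deq by metis
  qed
  have cardH: "card (H_set n m) = 2 ^ m * fact m"
    unfolding H_set_NW using card_image[OF Dinj] card_NW by simp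
  have hom: "psi m \<in> hom ?G (B_group m)"
  proof (rule homI)
    fix A assume "A \<in> carrier ?G"
    then obtain x where "A = Dclass n x" "x \<in> NW m" by (auto simp: H_set_NW)
    then show "psi m A \<in> carrier (B_group m)" using psi_cls rho_carrier by simp
  next
    fix A B assume "A \<in> carrier ?G" "B \<in> carrier ?G"
    then obtain x y where xy: "A = Dclass n x" "x \<in> NW m" "B = Dclass n y" "y \<in> NW m" by (auto simp: H_set_NW)
    have "psi m (A \<otimes>\<^bsub>?G\<^esub> B) = psi m (Dclass n (x @ y))" using xy by (simp add: D_mult)
    also have "... = rho m (phi x \<circ> phi y)" by (simp add: psi_cls phi_append)
    also have "... = rho m (phi x) \<circ> rho m (phi y)" by (rule rho_comp, rule pres_NW[OF xy(4) order_refl])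
    finally show "psi m (A \<otimes>\<^bsub>?G\<^esub> B) = psi m A \<otimes>\<^bsub>B_group m\<^esub> psi m B"
      using xy by (simp add: psi_cls B_group_def)
  qed
  have inj: "inj_on (psi m) (H_set n m)"
  proof (rule inj_onI)
    fix A B assume "A \<in> H_set n m" "B \<in> H_set n m" and e: "psi m A = psi m B"
    then obtain x y where xy: "A = Dclass n x" "x \<in> NW m" "B = Dclass n y" "y \<in> NW m" by (auto simp: H_set_NW)
    have "phi x = phi y" by (rule rho_inj[OF xy(2) xy(4) m1 assms(2)]) (use e xy psi_cls in simp)
    then show "A = B" using inj_NW[OF xy(2) xy(4)] xy by simp
  qed
  have sub: "psi m ` H_set n m \<subseteq> carrier (B_group m)"
    using hom unfolding hom_def by auto
  have "psi m ` H_set n m = carrier (B_group m)"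
  proof (rule card_seteq)
    show "finite (carrier (B_group m))" using B_carrier_card by simp
    show "psi m ` H_set n m \<subseteq> carrier (B_group m)" by (rule sub)
    show "card (carrier (B_group m)) \<le> card (psi m ` H_set n m)"
      using B_carrier_card[of m] card_image[OF inj] cardH by simp
  qed
  then have "bij_betw (psi m) (carrier ?G) (carrier (B_group m))" using inj by (simp add: bij_betw_def)
  then have "psi m \<in> iso ?G (B_group m)" using hom unfolding iso_def by simp
  then show "?G \<cong> B_group m" by (rule is_isoI)
qed


end
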